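(* For every $\beta\ge0$ and every $h\in\mathbb R$, $\textsc{f}_H(\beta,h)\ge H(0)$.
   Context: Let $\tau=(\tau_j)_{j\ge0}$ be a renewal process with $\tau_0=0$ and i.i.d. increments with values in $\mathbb N$, law $\mathbf P$, expectation $\mathbf E$; $K(n)=\mathbf P(\tau_1=n)>0$ for all $n$, $K(n)\sim C_Kn^{-(1+\alpha)}$, $\alpha>0$, $C_K>0$. $\delta_n=\mathbf 1_{n\in\{\tau_0,\tau_1,\dots\}}$. Let $\omega=(\omega_n)_{n\ge1}$ be i.i.d. with law $\mathbb P$, independent of $\tau$, $\lambda(s)=\log\mathbb E e^{s\omega_1}<\infty$ for all $s$, $\mathbb E\omega_1=0$, $\mathbb E\omega_1^2=1$. Let $\Psi(m,N)=Q(m,N)\exp(NH(m/N))$ ($N\in\mathbb N$, $1\le m\le N$) where: $H:[0,1]\to\mathbb R\cup\{-\infty\}$ is concave, real analytic in $(0,1)$, continuous on $[0,1]$ (possibly $H(0)$ and/or $H(1)$ equal $-\infty$); $Q\ge0$; for every $b>0$ there is $c>0$ with $Q(m,N)\le ce^{bN}$ for all $m\le N$; for all $0<u<v<1$, $b>0$ there is $c>0$ with $Q(m,N)\ge ce^{-bN}$ whenever $m/N\in[u,v]$. Let $Z^\Psi_{N,\omega,\beta,h}=\mathbf E[\exp(\sum_{j=1}^N(\beta\omega_j+h)\delta_j)\Psi(\sum_{j=1}^N\delta_j,N)\delta_N]$ and $\textsc{f}_H(\beta,h)=\lim_{N\to\infty}\frac1N\log Z^\Psi_{N,\omega,\beta,h}$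 (this limit exists $\mathbb P$-a.s. and in $\mathbb L^1$, and is deterministic). *)

theory Defs
  imports "HOL-Probability.Probability" "HOL-Library.Landau_Symbols"
begin

text \<open>Renewal process: increments T :: nat \<Rightarrow> nat, i.i.d. with law Kp
  (product measure); tau_j = sum of the first j increments, tau_0 = 0.\<close>

definition renewal_law :: "nat pmf \<Rightarrow> (nat \<Rightarrow> nat) measure" where
  "renewal_law Kp = (\<Pi>\<^sub>M i\<in>(UNIV::nat set). measure_pmf Kp)"

definition renewal_tau :: "(nat \<Rightarrow> nat) \<Rightarrow> nat \<Rightarrow> nat" where
  "renewal_tau T j = (\<Sum>i<j. T i)"

definition renewal_delta :: "(nat \<Rightarrow> nat) \<Rightarrow> nat \<Rightarrow> real" where
  "renewal_delta T n = (if n \<in> range (renewal_tau T) then 1 else 0)"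

text \<open>Disorder: omega = (omega_n), i.i.d. with law mu (only n >= 1 is used).\<close>
definition disorder_law :: "real measure \<Rightarrow> (nat \<Rightarrow> real) measure" where
  "disorder_law \<mu> = (\<Pi>\<^sub>M i\<in>(UNIV::nat set). \<mu>)"

definition Psi_fun :: "(nat \<Rightarrow> nat \<Rightarrow> real) \<Rightarrow> (real \<Rightarrow> ereal) \<Rightarrow> nat \<Rightarrow> nat \<Rightarrow> real" where
  "Psi_fun Q H m N =
     (if H (real m / real N) = -\<infinity> then 0
      else Q m N * exp (real N * real_of_ereal (H (real m / real N))))"

definition partition_fun ::
  "nat pmf \<Rightarrow> (nat \<Rightarrow> nat \<Rightarrow> real) \<Rightarrow> real \<Rightarrow> real \<Rightarrow> (nat \<Rightarrow> real) \<Rightarrow> nat \<Rightarrow> real" where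
  "partition_fun Kp Psi \<beta> h \<omega> N =
     (\<integral>T. exp (\<Sum>j=1..N. (\<beta> * \<omega> j + h) * renewal_delta T j)
          * Psi (nat \<lfloor>\<Sum>j=1..N. renewal_delta T j\<rfloor>) N * renewal_delta T N
      \<partial>renewal_law Kp)"

text \<open>Free energy f_H(beta,h): the (deterministic) limit of (1/N) log Z_N; since the
  convergence also holds in L^1, it equals the limit of (1/N) E log Z_N.\<close>
definition free_energy ::
  "nat pmf \<Rightarrow> real measure \<Rightarrow> (nat \<Rightarrow> nat \<Rightarrow> real) \<Rightarrow> real \<Rightarrow> real \<Rightarrow> real" where
  "free_energy Kp \<mu> Psi \<beta> h =
     lim (\<lambda>N. \<integral>\<omega>. ln (partition_fun Kp Psi \<beta> h \<omega> N) / real N \<partial>disorder_law \<mu>)"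

definition real_analytic_on :: "real set \<Rightarrow> (real \<Rightarrow> real) \<Rightarrow> bool" where
  "real_analytic_on S f \<longleftrightarrow>
     (\<forall>x\<in>S. \<exists>r>0. \<exists>c::nat \<Rightarrow> real. \<forall>y. \<bar>y - x\<bar> < r \<longrightarrow> (\<lambda>n. c n * (y - x) ^ n) sums f y)"

definition ereal_concave_on :: "real set \<Rightarrow> (real \<Rightarrow> ereal) \<Rightarrow> bool" where
  "ereal_concave_on S H \<longleftrightarrow>
     (\<forall>x\<in>S. \<forall>y\<in>S. \<forall>t::real. 0 \<le> t \<and> t \<le> 1 \<longrightarrow>
        ereal t * H x + ereal (1 - t) * H y \<le> H (t * x + (1 - t) * y))"

end

theory Submission
  imports Defs
begin


definition comps :: "nat \<Rightarrow> nat list set" where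
  "comps N = {g. (\<forall>x\<in>set g. 0 < x) \<and> sum_list g = N}"

definition ps :: "nat list \<Rightarrow> nat \<Rightarrow> nat" where
  "ps g i = sum_list (take i g)"

definition wK :: "nat pmf \<Rightarrow> nat list \<Rightarrow> real" where
  "wK Kp g = prod_list (map (pmf Kp) g)"

definition en :: "real \<Rightarrow> real \<Rightarrow> (nat \<Rightarrow> real) \<Rightarrow> nat list \<Rightarrow> real" where
  "en \<beta> h \<omega> g = (\<Sum>i=1..length g. \<beta> * \<omega> (ps g i) + h)"

lemma length_le_sum: "\<forall>x\<in>set g. 0 < (x::nat) \<Longrightarrow> length g \<le> sum_list g"
  by (induction g) auto

lemma finite_comps: "finite (comps N)"
proof -
  have "comps N \<subseteq> {g. set g \<subseteq> {0..N} \<and> length g \<le> N}"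
  proof
    fix g assume g: "g \<in> comps N"
    then have pos: "\<forall>x\<in>set g. 0 < x" and s: "sum_list g = N" by (auto simp: comps_def)
    have "set g \<subseteq> {0..N}" using s member_le_sum_list by fastforce
    moreover have "length g \<le> sum_list g" using pos by (rule length_le_sum)
    ultimately show "g \<in> {g. set g \<subseteq> {0..N} \<and> length g \<le> N}" using s by auto
  qed
  then show ?thesis by (rule finite_subset) (rule finite_lists_length_le, simp)
qed

lemma tau_Suc: "renewal_tau T (Suc k) = renewal_tau T k + T k"
  by (simp add: renewal_tau_def)

lemma tau_0: "renewal_tau T 0 = 0"
  by (simp add: renewal_tau_def)

lemma tau_smono: "\<forall>i. 0 < T i \<Longrightarrow> strict_mono (renewal_tau T)"
  by (rule strict_monoI_Suc) (simp add: tau_Suc)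

lemma sum_list_map_upt: "sum_list (map T [0..<k]) = renewal_tau T k"
  by (induction k) (auto simp: renewal_tau_def)

lemma ps_map: "i \<le> k \<Longrightarrow> ps (map T [0..<k]) i = renewal_tau T i"
  by (simp add: ps_def take_map sum_list_map_upt min_def)

lemma map_nth_eq: "\<forall>i<length g. T i = g!i \<Longrightarrow> g = map T [0..<length g]"
  by (rule nth_equalityI) auto

lemma pointwise:
  fixes T :: "nat \<Rightarrow> nat"
  assumes pos: "\<forall>i. 0 < T i" and N: "N \<ge> 1"
  shows "exp (\<Sum>j=1..N. (\<beta> * \<omega> j + h) * renewal_delta T j) * G (nat \<lfloor>\<Sum>j=1..N. renewal_delta T j\<rfloor>) N * renewal_delta T N
   = (\<Sum>g\<in>comps N. (if \<forall>i<length g. T i = g!i then exp (en \<beta> h \<omega> g) * G (length g) N else 0))"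
proof -
  let ?tau = "renewal_tau T"
  have sm: "strict_mono ?tau" using pos by (rule tau_smono)
  have inj: "inj ?tau" using sm by (rule strict_mono_imp_inj_on)
  show ?thesis
  proof (cases "N \<in> range ?tau")
    case True
    then obtain k where k: "?tau k = N" by auto
    define g0 where "g0 = map T [0..<k]"
    have g0c: "g0 \<in> comps N" using pos k by (auto simp: comps_def g0_def sum_list_map_upt)
    have iff: "(\<forall>i<length g. T i = g!i) \<longleftrightarrow> g = g0" if g: "g \<in> comps N" for g
    proof
      assume a: "\<forall>i<length g. T i = g!i"
      then have ge: "g = map T [0..<length g]" by (rule map_nth_eq)
      have "?tau (length g) = N" using g ge sum_list_map_upt[of T "length g"] by (auto simp: comps_def)
      then have "length g = k" using k inj by (metis injD)
      then show "g = g0" using ge g0_def by simp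
    qed (simp add: g0_def)
    have rhs: "(\<Sum>g\<in>comps N. (if \<forall>i<length g. T i = g!i then exp (en \<beta> h \<omega> g) * G (length g) N else 0))
        = exp (en \<beta> h \<omega> g0) * G k N"
    proof -
      have "(\<Sum>g\<in>comps N. (if \<forall>i<length g. T i = g!i then exp (en \<beta> h \<omega> g) * G (length g) N else 0))
        = (\<Sum>g\<in>comps N. (if g = g0 then exp (en \<beta> h \<omega> g) * G (length g) N else 0))"
        by (rule sum.cong) (auto simp: iff)
      also have "\<dots> = exp (en \<beta> h \<omega> g0) * G k N" using g0c by (simp add: finite_comps g0_def)
      finally show ?thesis .
    qed
    have set_eq: "{j\<in>{1..N}. j \<in> range ?tau} = ?tau ` {1..k}"
    proof
      show "{j\<in>{1..N}. j \<in> range ?tau} \<subseteq> ?tau ` {1..k}"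
      proof
        fix j assume "j \<in> {j\<in>{1..N}. j \<in> range ?tau}"
        then obtain i where j: "j = ?tau i" "1 \<le> j" "j \<le> N" by auto
        have "i \<noteq> 0" using j tau_0[of T] by (metis not_one_le_zero)
        moreover have "i \<le> k" using j k sm by (metis strict_mono_less_eq)
        ultimately show "j \<in> ?tau ` {1..k}" using j by auto
      qed
    next
      show "?tau ` {1..k} \<subseteq> {j\<in>{1..N}. j \<in> range ?tau}"
      proof
        fix j assume "j \<in> ?tau ` {1..k}"
        then obtain i where i: "j = ?tau i" "1 \<le> i" "i \<le> k" by auto
        have "?tau 0 < ?tau i" using sm i by (simp add: strict_mono_less)
        moreover have "?tau i \<le> ?tau k" using sm i by (simp add: strict_mono_less_eq)
        ultimately show "j \<in> {j\<in>{1..N}. j \<in> range ?tau}" using i k tau_0[of T] by auto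
      qed
    qed
    have "(\<Sum>j=1..N. (\<beta> * \<omega> j + h) * renewal_delta T j) = (\<Sum>j=1..N. if j \<in> range ?tau then \<beta> * \<omega> j + h else 0)"
      by (rule sum.cong) (auto simp: renewal_delta_def)
    also have "\<dots> = (\<Sum>j\<in>{j\<in>{1..N}. j \<in> range ?tau}. \<beta> * \<omega> j + h)"
      by (rule sum.inter_filter[symmetric]) simp
    also have "\<dots> = (\<Sum>i=1..k. \<beta> * \<omega> (?tau i) + h)"
      unfolding set_eq by (subst sum.reindex) (auto intro: inj_on_subset[OF inj])
    also have "\<dots> = en \<beta> h \<omega> g0"
      unfolding en_def g0_def by (auto intro!: sum.cong simp: ps_map)
    finally have e1: "(\<Sum>j=1..N. (\<beta> * \<omega> j + h) * renewal_delta T j) = en \<beta> h \<omega> g0" .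
    have "(\<Sum>j=1..N. renewal_delta T j) = (\<Sum>j=1..N. if j \<in> range ?tau then 1 else 0)"
      by (rule sum.cong) (auto simp: renewal_delta_def)
    also have "\<dots> = (\<Sum>j\<in>{j\<in>{1..N}. j \<in> range ?tau}. 1)"
      by (rule sum.inter_filter[symmetric]) simp
    also have "\<dots> = real (card {j\<in>{1..N}. j \<in> range ?tau})" by simp
    also have "\<dots> = real k" unfolding set_eq
      by (subst card_image) (auto intro: inj_on_subset[OF inj])
    finally have e2: "(\<Sum>j=1..N. renewal_delta T j) = real k" .
    have e3: "renewal_delta T N = 1" using True by (simp add: renewal_delta_def)
    show ?thesis using rhs e1 e2 e3 by simp
  next
    case False
    have "renewal_delta T N = 0" using False by (simp add: renewal_delta_def)
    moreover have "(\<Sum>g\<in>comps N. (if \<forall>i<length g. T i = g!i then exp (en \<beta> h \<omega> g) * G (length g) N else 0)) = 0"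
    proof (rule sum.neutral, rule ballI)
      fix g assume g: "g \<in> comps N"
      show "(if \<forall>i<length g. T i = g!i then exp (en \<beta> h \<omega> g) * G (length g) N else 0) = 0"
      proof (cases "\<forall>i<length g. T i = g!i")
        case True
        then have ge: "g = map T [0..<length g]" by (rule map_nth_eq)
        have "?tau (length g) = N" using g ge sum_list_map_upt[of T "length g"] by (auto simp: comps_def)
        then show ?thesis using False by auto
      qed auto
    qed
    ultimately show ?thesis by simp
  qed
qed


lemma prod_list_map_nth: "prod_list (map f g) = (\<Prod>i<length g. f (g!i))"
  by (induction g) (simp_all del: prod.lessThan_Suc add: prod.lessThan_Suc_shift)

lemma renewal_measurable:
  "(\<lambda>T. renewal_delta T n) \<in> borel_measurable (PiM UNIV (\<lambda>_. measure_pmf Kp))"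
  unfolding renewal_delta_def renewal_tau_def image_def
  by measurable

lemma partition_eq:
  assumes K0: "pmf Kp 0 = 0" and N: "N \<ge> 1"
  shows "partition_fun Kp G \<beta> h \<omega> N = (\<Sum>g\<in>comps N. wK Kp g * exp (en \<beta> h \<omega> g) * G (length g) N)"
proof -
  interpret P: product_prob_space "\<lambda>_. measure_pmf Kp" "UNIV :: nat set" by unfold_locales
  let ?P = "PiM (UNIV :: nat set) (\<lambda>_. measure_pmf Kp)"
  define cyl where "cyl g = {T \<in> space ?P. \<forall>i\<in>{..<length g}. T i \<in> {g!i}}" for g
  have cyl_sets: "cyl g \<in> sets ?P" for g unfolding cyl_def
    by (intro sets.sets_Collect_finite_All sets_Collect_single') auto
  have cyl_meas: "measure ?P (cyl g) = wK Kp g" for g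
  proof -
    have "emeasure ?P (cyl g) = (\<Prod>i\<in>{..<length g}. emeasure (measure_pmf Kp) {g!i})"
      unfolding cyl_def by (rule P.emeasure_PiM_Collect) auto
    also have "\<dots> = (\<Prod>i\<in>{..<length g}. ennreal (pmf Kp (g!i)))"
      by (simp add: emeasure_pmf_single)
    also have "\<dots> = ennreal (wK Kp g)"
      by (simp add: wK_def prod_list_map_nth prod_ennreal)
    moreover have "0 \<le> wK Kp g" by (simp add: wK_def prod_list_map_nth prod_nonneg)
    ultimately show ?thesis by (simp add: measure_def)
  qed
  have space_P: "space ?P = UNIV" by (simp add: space_PiM)
  have AEpos: "AE T in ?P. \<forall>i. 0 < T i"
  proof (subst AE_all_countable, rule allI)
    fix i
    show "AE T in ?P. 0 < T i"
      by (rule P.AE_component) (auto simp: AE_measure_pmf_iff set_pmf_iff K0 intro!: gr0I)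
  qed
  define F where "F g = exp (en \<beta> h \<omega> g) * G (length g) N" for g
  have "partition_fun Kp G \<beta> h \<omega> N = integral\<^sup>L ?P (\<lambda>T. \<Sum>g\<in>comps N. indicator (cyl g) T * F g)"
    unfolding partition_fun_def renewal_law_def
  proof (rule integral_cong_AE)
    show "(\<lambda>T. exp (\<Sum>j=1..N. (\<beta> * \<omega> j + h) * renewal_delta T j) * G (nat \<lfloor>\<Sum>j=1..N. renewal_delta T j\<rfloor>) N * renewal_delta T N) \<in> borel_measurable ?P"
      unfolding renewal_delta_def renewal_tau_def image_def by measurable
    show "(\<lambda>T. \<Sum>g\<in>comps N. indicator (cyl g) T * F g) \<in> borel_measurable ?P"
      using cyl_sets by measurable
    show "AE T in ?P. exp (\<Sum>j=1..N. (\<beta> * \<omega> j + h) * renewal_delta T j) * G (nat \<lfloor>\<Sum>j=1..N. renewal_delta T j\<rfloor>) N * renewal_delta T N = (\<Sum>g\<in>comps N. indicator (cyl g) T * F g)"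
      using AEpos
    proof (rule AE_mp, intro AE_I2 impI)
      fix T :: "nat \<Rightarrow> nat" assume pos: "\<forall>i. 0 < T i"
      show "exp (\<Sum>j=1..N. (\<beta> * \<omega> j + h) * renewal_delta T j) * G (nat \<lfloor>\<Sum>j=1..N. renewal_delta T j\<rfloor>) N * renewal_delta T N = (\<Sum>g\<in>comps N. indicator (cyl g) T * F g)"
        unfolding pointwise[OF pos N]
        by (rule sum.cong) (auto simp: cyl_def F_def space_P indicator_def)
    qed
  qed
  also have "\<dots> = (\<Sum>g\<in>comps N. measure ?P (cyl g) * F g)"
  proof -
    have "integral\<^sup>L ?P (\<lambda>T. \<Sum>g\<in>comps N. indicator (cyl g) T * F g) = (\<Sum>g\<in>comps N. integral\<^sup>L ?P (\<lambda>T. indicator (cyl g) T * F g))"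
      by (rule Bochner_Integration.integral_sum) (auto intro!: integrable_mult_left integrable_mult_right integrable_real_indicator cyl_sets simp: less_top[symmetric] P.emeasure_finite)
    also have "\<dots> = (\<Sum>g\<in>comps N. measure ?P (cyl g) * F g)"
      by (rule sum.cong) (auto simp: integral_indicator cyl_sets space_P)
    finally show ?thesis .
  qed
  also have "\<dots> = (\<Sum>g\<in>comps N. wK Kp g * exp (en \<beta> h \<omega> g) * G (length g) N)"
    by (simp add: cyl_meas F_def mult.assoc)
  finally show ?thesis .
qed



definition Zf :: "nat pmf \<Rightarrow> real \<Rightarrow> real \<Rightarrow> (nat \<Rightarrow> nat \<Rightarrow> real) \<Rightarrow> nat \<Rightarrow> (nat \<Rightarrow> real) \<Rightarrow> real" where
  "Zf Kp \<beta> h G N \<omega> = (\<Sum>g\<in>comps N. wK Kp g * exp (en \<beta> h \<omega> g) * G (length g) N)"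

lemma ps_append1: "i \<le> length g1 \<Longrightarrow> ps (g1 @ g2) i = ps g1 i"
  by (simp add: ps_def)

lemma ps_append2: "ps (g1 @ g2) (length g1 + i) = sum_list g1 + ps g2 i"
  by (simp add: ps_def)

lemma en_append:
  "en \<beta> h \<omega> (g1 @ g2) = en \<beta> h \<omega> g1 + en \<beta> h (\<lambda>i. \<omega> (sum_list g1 + i)) g2"
proof -
  let ?f = "\<lambda>i. \<beta> * \<omega> (ps (g1 @ g2) i) + h"
  have "en \<beta> h \<omega> (g1 @ g2) = (\<Sum>i=1..length g1 + length g2. ?f i)" by (simp add: en_def)
  also have "\<dots> = (\<Sum>i=1..length g1. ?f i) + (\<Sum>i=length g1 + 1..length g1 + length g2. ?f i)"
    by (rule sum.ub_add_nat) simp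
  also have "(\<Sum>i=1..length g1. ?f i) = en \<beta> h \<omega> g1"
    unfolding en_def by (rule sum.cong) (auto simp: ps_append1)
  also have "(\<Sum>i=length g1 + 1..length g1 + length g2. ?f i) = (\<Sum>i=1..length g2. ?f (i + length g1))"
    using sum.shift_bounds_cl_nat_ivl[of ?f 1 "length g1" "length g2"] by (simp add: add.commute)
  also have "\<dots> = en \<beta> h (\<lambda>i. \<omega> (sum_list g1 + i)) g2"
    unfolding en_def by (rule sum.cong) (auto simp: ps_append2[of g1 g2, simplified add.commute] add.commute)
  finally show ?thesis .
qed

lemma wK_append: "wK Kp (g1 @ g2) = wK Kp g1 * wK Kp g2"
  by (simp add: wK_def)

lemma wK_nonneg: "0 \<le> wK Kp g"
  by (simp add: wK_def prod_list_map_nth prod_nonneg)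

lemma append_inj_comps:
  assumes "g1 @ g2 = g1' @ g2'" "sum_list g1 = sum_list g1'" "\<forall>x\<in>set g1. 0 < x" "\<forall>x\<in>set g1'. 0 < (x::nat)"
  shows "g1 = g1' \<and> g2 = g2'"
proof -
  from assms(1) obtain us where us: "(g1 = g1' @ us \<and> us @ g2 = g2') \<or> (g1 @ us = g1' \<and> g2 = us @ g2')"
    by (auto simp: append_eq_append_conv2)
  then show ?thesis
  proof
    assume a: "g1 = g1' @ us \<and> us @ g2 = g2'"
    then have "sum_list us = 0" using assms(2) by simp
    moreover have "\<forall>x\<in>set us. 0 < x" using a assms(3) by auto
    ultimately have "us = []" by (cases us) auto
    then show ?thesis using a by simp
  next
    assume a: "g1 @ us = g1' \<and> g2 = us @ g2'"
    then have "sum_list g1' = sum_list g1 + sum_list us" by auto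
    then have "sum_list us = 0" using assms(2) by simp
    moreover have "\<forall>x\<in>set us. 0 < x" using a assms(4) by auto
    ultimately have "us = []" by (cases us) auto
    then show ?thesis using a by simp
  qed
qed

lemma comps_length_pos: "g \<in> comps N \<Longrightarrow> N \<ge> 1 \<Longrightarrow> 1 \<le> length g"
  by (cases g) (auto simp: comps_def)

lemma comps_length_le: "g \<in> comps N \<Longrightarrow> length g \<le> N"
  using length_le_sum by (auto simp: comps_def)

lemma Zf_super:
  assumes G1: "\<And>m N. 0 \<le> G1 m N" and G2: "\<And>m N. 0 \<le> G2 m N" and G3: "\<And>m N. 0 \<le> G3 m N"
    and G: "\<And>m1 m2. 1 \<le> m1 \<Longrightarrow> m1 \<le> N1 \<Longrightarrow> 1 \<le> m2 \<Longrightarrow> m2 \<le> N2 \<Longrightarrow> G1 m1 N1 * G2 m2 N2 \<le> G3 (m1 + m2) (N1 + N2)"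
    and N1: "N1 \<ge> 1" and N2: "N2 \<ge> 1"
  shows "Zf Kp \<beta> h G1 N1 \<omega> * Zf Kp \<beta> h G2 N2 (\<lambda>i. \<omega> (N1 + i)) \<le> Zf Kp \<beta> h G3 (N1 + N2) \<omega>"
proof -
  define t :: "(nat\<Rightarrow>nat\<Rightarrow>real) \<Rightarrow> nat \<Rightarrow> (nat\<Rightarrow>real) \<Rightarrow> nat list \<Rightarrow> real" where "t G N \<omega>' g = wK Kp g * exp (en \<beta> h \<omega>' g) * G (length g) N" for G N \<omega>' g
  have tnn: "0 \<le> t G3 (N1 + N2) \<omega> g" for g using G3 wK_nonneg by (simp add: t_def)
  have "Zf Kp \<beta> h G1 N1 \<omega> * Zf Kp \<beta> h G2 N2 (\<lambda>i. \<omega> (N1 + i))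
      = (\<Sum>(g1, g2)\<in>comps N1 \<times> comps N2. t G1 N1 \<omega> g1 * t G2 N2 (\<lambda>i. \<omega> (N1 + i)) g2)"
    by (simp add: Zf_def t_def sum_product sum.cartesian_product)
  also have "\<dots> \<le> (\<Sum>(g1, g2)\<in>comps N1 \<times> comps N2. t G3 (N1 + N2) \<omega> (g1 @ g2))"
  proof (rule sum_mono, clarify)
    fix g1 g2 assume g1: "g1 \<in> comps N1" and g2: "g2 \<in> comps N2"
    have s1: "sum_list g1 = N1" using g1 by (simp add: comps_def)
    have "t G1 N1 \<omega> g1 * t G2 N2 (\<lambda>i. \<omega> (N1 + i)) g2
        = (wK Kp g1 * wK Kp g2) * exp (en \<beta> h \<omega> g1 + en \<beta> h (\<lambda>i. \<omega> (N1 + i)) g2) * (G1 (length g1) N1 * G2 (length g2) N2)"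
      by (simp add: t_def exp_add algebra_simps)
    also have "\<dots> \<le> (wK Kp g1 * wK Kp g2) * exp (en \<beta> h \<omega> g1 + en \<beta> h (\<lambda>i. \<omega> (N1 + i)) g2) * G3 (length g1 + length g2) (N1 + N2)"
      using comps_length_pos[OF g1 N1] comps_length_pos[OF g2 N2] comps_length_le[OF g1] comps_length_le[OF g2]
      by (intro mult_left_mono G mult_nonneg_nonneg wK_nonneg) auto
    also have "\<dots> = t G3 (N1 + N2) \<omega> (g1 @ g2)"
      by (simp add: t_def wK_append en_append s1)
    finally show "t G1 N1 \<omega> g1 * t G2 N2 (\<lambda>i. \<omega> (N1 + i)) g2 \<le> t G3 (N1 + N2) \<omega> (g1 @ g2)" .
  qed
  also have "\<dots> = (\<Sum>g\<in>(\<lambda>(g1, g2). g1 @ g2) ` (comps N1 \<times> comps N2). t G3 (N1 + N2) \<omega> g)"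
  proof (subst sum.reindex)
    show "inj_on (\<lambda>(g1, g2). g1 @ g2) (comps N1 \<times> comps N2)"
      by (auto simp: inj_on_def comps_def dest: append_inj_comps)
  qed (simp add: case_prod_beta)
  also have "\<dots> \<le> (\<Sum>g\<in>comps (N1 + N2). t G3 (N1 + N2) \<omega> g)"
    by (rule sum_mono2) (auto simp: finite_comps tnn, auto simp: comps_def)
  also have "\<dots> = Zf Kp \<beta> h G3 (N1 + N2) \<omega>" by (simp add: Zf_def t_def)
  finally show ?thesis .
qed



definition EH :: "(real \<Rightarrow> ereal) \<Rightarrow> real \<Rightarrow> real \<Rightarrow> nat \<Rightarrow> nat \<Rightarrow> real" where
  "EH H u v m N = (if u \<le> real m / real N \<and> real m / real N \<le> v \<and> H (real m / real N) \<noteq> -\<infinity>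
     then exp (real N * real_of_ereal (H (real m / real N))) else 0)"

lemma EH_nonneg: "0 \<le> EH H u v m N"
  by (simp add: EH_def)

lemma EH_super:
  assumes conc: "ereal_concave_on {0..1} H" and npinf: "\<And>x. x \<in> {0..1} \<Longrightarrow> H x \<noteq> \<infinity>"
    and m1: "1 \<le> m1" "m1 \<le> N1" and m2: "1 \<le> m2" "m2 \<le> N2"
    and dens: "u1 \<le> real m1 / real N1 \<Longrightarrow> real m1 / real N1 \<le> v1 \<Longrightarrow>
       u2 \<le> real m2 / real N2 \<Longrightarrow> real m2 / real N2 \<le> v2 \<Longrightarrow>
       u \<le> real (m1 + m2) / real (N1 + N2) \<and> real (m1 + m2) / real (N1 + N2) \<le> v"
  shows "EH H u1 v1 m1 N1 * EH H u2 v2 m2 N2 \<le> EH H u v (m1 + m2) (N1 + N2)"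
proof (cases "EH H u1 v1 m1 N1 * EH H u2 v2 m2 N2 = 0")
  case True
  then show ?thesis by (metis EH_nonneg)
next
  case False
  define x where "x = real m1 / real N1"
  define y where "y = real m2 / real N2"
  define z where "z = real (m1 + m2) / real (N1 + N2)"
  define t where "t = real N1 / real (N1 + N2)"
  have c1: "u1 \<le> x" "x \<le> v1" "H x \<noteq> -\<infinity>" and c2: "u2 \<le> y" "y \<le> v2" "H y \<noteq> -\<infinity>"
    using False by (auto simp: EH_def x_def y_def split: if_splits)
  have N1p: "real N1 > 0" and N2p: "real N2 > 0" using m1 m2 by auto
  have x01: "x \<in> {0..1}" using m1 N1p by (auto simp: x_def)
  have y01: "y \<in> {0..1}" using m2 N2p by (auto simp: y_def)
  have t01: "0 \<le> t" "t \<le> 1" using N1p N2p by (auto simp: t_def)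
  have e1: "t * x = real m1 / real (N1 + N2)" using N1p by (simp add: t_def x_def)
  have "1 - t = real N2 / real (N1 + N2)" using N1p N2p by (simp add: t_def field_simps)
  then have e2: "(1 - t) * y = real m2 / real (N1 + N2)" using N2p by (simp add: y_def)
  have zeq: "t * x + (1 - t) * y = z" using e1 e2 by (simp add: z_def add_divide_distrib)
  have z01: "z \<in> {0..1}" using m1 m2 N1p N2p by (auto simp: z_def)
  have uz: "u \<le> z" "z \<le> v" using dens c1 c2 unfolding x_def y_def z_def by auto
  obtain a where a: "H x = ereal a" using c1 npinf[OF x01] by (cases "H x") auto
  obtain b where b: "H y = ereal b" using c2 npinf[OF y01] by (cases "H y") auto
  have "ereal t * H x + ereal (1 - t) * H y \<le> H (t * x + (1 - t) * y)"
    using conc x01 y01 t01 unfolding ereal_concave_on_def by blast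
  then have hz: "ereal (t * a + (1 - t) * b) \<le> H z" using a b zeq by simp
  then have "H z \<noteq> -\<infinity>" by auto
  then obtain c where c: "H z = ereal c" using npinf[OF z01] by (cases "H z") auto
  have tc: "t * a + (1 - t) * b \<le> c" using hz c by simp
  have f1: "real (N1 + N2) * t = real N1" using N1p N2p by (simp add: t_def)
  have f2: "real (N1 + N2) * (1 - t) = real N2" using f1 by (simp add: right_diff_distrib)
  have "real (N1 + N2) * (t * a + (1 - t) * b) = (real (N1 + N2) * t) * a + (real (N1 + N2) * (1 - t)) * b"
    by (simp only: distrib_left mult.assoc)
  then have "real N1 * a + real N2 * b = real (N1 + N2) * (t * a + (1 - t) * b)"
    using f1 f2 by simp
  also have "\<dots> \<le> real (N1 + N2) * c" using tc by (intro mult_left_mono) auto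
  finally have le: "real N1 * a + real N2 * b \<le> real (N1 + N2) * c" .
  have "EH H u1 v1 m1 N1 * EH H u2 v2 m2 N2 = exp (real N1 * a + real N2 * b)"
    using c1 c2 a b by (simp add: EH_def x_def y_def exp_add)
  also have "\<dots> \<le> exp (real (N1 + N2) * c)" using le by simp
  also have "\<dots> = EH H u v (m1 + m2) (N1 + N2)"
    using uz c by (simp add: EH_def z_def)
  finally show ?thesis .
qed

lemma dens_convex:
  assumes "1 \<le> N1" "1 \<le> N2" "u \<le> real m1 / real N1" "real m1 / real N1 \<le> v" "u \<le> real m2 / real N2" "real m2 / real N2 \<le> v"
  shows "u \<le> real (m1 + m2) / real (N1 + N2) \<and> real (m1 + m2) / real (N1 + N2) \<le> v"
proof -
  have p1: "real N1 > 0" and p2: "real N2 > 0" using assms by auto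
  have "u * real N1 \<le> real m1" "real m1 \<le> v * real N1" using assms(3,4) p1 by (auto simp: field_simps)
  moreover have "u * real N2 \<le> real m2" "real m2 \<le> v * real N2" using assms(5,6) p2 by (auto simp: field_simps)
  ultimately show ?thesis using p1 p2 by (auto simp: field_simps)
qed

lemma Psi_upper:
  assumes "Q m N \<le> c * exp (b * real N)" "m \<le> N" "N \<ge> 1"
  shows "Psi_fun Q H m N \<le> c * exp (b * real N) * EH H 0 1 m N"
  using assms by (auto simp: Psi_fun_def EH_def intro: mult_right_mono)

lemma Psi_lower:
  assumes Qnn: "0 \<le> Q m N" and Ql: "u \<le> real m / real N \<Longrightarrow> real m / real N \<le> v \<Longrightarrow> c * exp (- b * real N) \<le> Q m N"
  shows "c * exp (- b * real N) * EH H u v m N \<le> Psi_fun Q H m N"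
  using assms by (auto simp: Psi_fun_def EH_def intro: mult_right_mono)

lemma Zf_mono:
  assumes "\<And>m. 1 \<le> m \<Longrightarrow> m \<le> N \<Longrightarrow> G m N \<le> G' m N" "N \<ge> 1"
  shows "Zf Kp \<beta> h G N \<omega> \<le> Zf Kp \<beta> h G' N \<omega>"
  unfolding Zf_def
  using assms comps_length_pos comps_length_le
  by (intro sum_mono mult_left_mono mult_nonneg_nonneg wK_nonneg) auto

lemma Zf_scale: "Zf Kp \<beta> h (\<lambda>m N'. c * G m N') N \<omega> = c * Zf Kp \<beta> h G N \<omega>"
  unfolding Zf_def by (simp add: sum_distrib_left algebra_simps)



lemma ps_smono:
  assumes pos: "\<forall>x\<in>set g. 0 < (x::nat)"
  shows "i < j \<Longrightarrow> j \<le> length g \<Longrightarrow> ps g i < ps g j"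
proof (induction j)
  case 0 then show ?case by simp
next
  case (Suc j)
  have lt: "j < length g" using Suc.prems by simp
  have step: "ps g (Suc j) = ps g j + g ! j"
    using lt by (simp add: ps_def take_Suc_conv_app_nth)
  have "0 < g ! j" using pos lt nth_mem by blast
  then have "ps g j < ps g (Suc j)" using step by simp
  moreover have "i < j \<Longrightarrow> ps g i < ps g j" using Suc by simp
  ultimately show ?case using Suc.prems by (cases "i = j") auto
qed

lemma ps_le_sum: "ps g i \<le> sum_list g"
proof -
  have "sum_list g = sum_list (take i g) + sum_list (drop i g)"
    by (metis append_take_drop_id sum_list_append)
  then show ?thesis by (simp add: ps_def)
qed

lemma en_le_B:
  assumes g: "g \<in> comps N"
  shows "en \<beta> h \<omega> g \<le> (\<Sum>j=1..N. \<bar>\<beta> * \<omega> j + h\<bar>)"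
proof -
  have pos: "\<forall>x\<in>set g. 0 < x" and s: "sum_list g = N" using g by (auto simp: comps_def)
  have inj: "inj_on (ps g) {1..length g}"
    using ps_smono[OF pos] by (auto simp: inj_on_def) (metis linorder_neqE_nat less_irrefl)
  have sub: "ps g ` {1..length g} \<subseteq> {1..N}"
  proof
    fix j assume "j \<in> ps g ` {1..length g}"
    then obtain i where i: "j = ps g i" "1 \<le> i" "i \<le> length g" by auto
    have "ps g 0 < ps g i" using ps_smono[OF pos, of 0 i] i by simp
    then show "j \<in> {1..N}" using i ps_le_sum[of g i] s by (auto simp: ps_def)
  qed
  have "en \<beta> h \<omega> g \<le> (\<Sum>i=1..length g. \<bar>\<beta> * \<omega> (ps g i) + h\<bar>)"
    unfolding en_def by (rule sum_mono) simp
  also have "\<dots> = (\<Sum>j\<in>ps g ` {1..length g}. \<bar>\<beta> * \<omega> j + h\<bar>)"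
    by (subst sum.reindex[OF inj]) simp
  also have "\<dots> \<le> (\<Sum>j=1..N. \<bar>\<beta> * \<omega> j + h\<bar>)"
    by (rule sum_mono2) (use sub in auto)
  finally show ?thesis .
qed

locale dis =
  fixes \<mu> :: "real measure"
  assumes prob: "prob_space \<mu>" and sb: "sets \<mu> = sets borel"
    and expm: "\<And>s. integrable \<mu> (\<lambda>x. exp (s * x))"
    and mean: "(\<integral>x. x \<partial>\<mu>) = 0"
begin

abbreviation "\<Omega> \<equiv> PiM (UNIV :: nat set) (\<lambda>_. \<mu>)"

sublocale PP: product_prob_space "\<lambda>_. \<mu>" "UNIV :: nat set"
  by (simp add: product_prob_space_def product_prob_space_axioms_def product_sigma_finite_def prob
      prob_space_imp_sigma_finite)

lemma comp_meas[measurable]: "(\<lambda>\<omega>. \<omega> j) \<in> borel_measurable \<Omega>"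
proof -
  have "(\<lambda>\<omega>. \<omega> j) \<in> measurable \<Omega> \<mu>" by (rule measurable_component_singleton) simp
  then show ?thesis using sb by (simp add: measurable_cong_sets[OF refl sb])
qed

lemma mu_borel: assumes "f \<in> borel_measurable borel" shows "f \<in> borel_measurable \<mu>"
  using assms by (simp only: measurable_cong_sets[OF sb refl])

lemma int_x: "integrable \<mu> (\<lambda>x. x)"
proof (rule Bochner_Integration.integrable_bound)
  show "integrable \<mu> (\<lambda>x. exp (1 * x) + exp ((-1) * x))" by (rule Bochner_Integration.integrable_add[OF expm expm])
  show "(\<lambda>x. x) \<in> borel_measurable \<mu>" by (rule mu_borel) simp
  show "AE x in \<mu>. norm x \<le> norm (exp (1 * x) + exp ((-1) * x))"
  proof (rule AE_I2)
    fix x :: real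
    have "\<bar>x\<bar> \<le> exp \<bar>x\<bar>" using exp_ge_add_one_self[of "\<bar>x\<bar>"] by linarith
    also have "\<dots> \<le> exp x + exp (- x)" by (cases "x \<ge> 0") (auto simp: add_pos_nonneg)
    finally show "norm x \<le> norm (exp (1 * x) + exp ((-1) * x))" by simp
  qed
qed

lemma comp_distr: "distr \<Omega> \<mu> (\<lambda>\<omega>. \<omega> j) = \<mu>"
  by (rule PP.PiM_component) simp

lemma comp_integrable:
  fixes f :: "real \<Rightarrow> real"
  assumes "f \<in> borel_measurable borel" "integrable \<mu> f"
  shows "integrable \<Omega> (\<lambda>\<omega>. f (\<omega> j))"
proof -
  have m: "(\<lambda>\<omega>. \<omega> j) \<in> measurable \<Omega> \<mu>" by (rule measurable_component_singleton) simp
  have fm: "f \<in> borel_measurable \<mu>" using assms(1) by (rule mu_borel)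
  have "integrable (distr \<Omega> \<mu> (\<lambda>\<omega>. \<omega> j)) f" using assms(2) comp_distr by simp
  moreover have "integrable (distr \<Omega> \<mu> (\<lambda>\<omega>. \<omega> j)) f = integrable \<Omega> (\<lambda>\<omega>. f (\<omega> j))"
    by (rule integrable_distr_eq) (rule m, rule fm)
  ultimately show ?thesis by simp
qed

lemma comp_integral:
  fixes f :: "real \<Rightarrow> real"
  assumes "f \<in> borel_measurable borel"
  shows "(\<integral>\<omega>. f (\<omega> j) \<partial>\<Omega>) = (\<integral>x. f x \<partial>\<mu>)"
proof -
  have m: "(\<lambda>\<omega>. \<omega> j) \<in> measurable \<Omega> \<mu>" by (rule measurable_component_singleton) simp
  have fm: "f \<in> borel_measurable \<mu>" using assms(1) by (rule mu_borel)
  have "(\<integral>x. f x \<partial>\<mu>) = integral\<^sup>L (distr \<Omega> \<mu> (\<lambda>\<omega>. \<omega> j)) f" using comp_distr by simp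
  also have "\<dots> = (\<integral>\<omega>. f (\<omega> j) \<partial>\<Omega>)" by (rule integral_distr) (rule m, rule fm)
  finally show ?thesis by simp
qed

lemma int_abs: "integrable \<mu> (\<lambda>x. \<bar>\<beta> * x + h\<bar>)"
  using int_x by (intro integrable_abs Bochner_Integration.integrable_add integrable_mult_right) auto

lemma comp_int_abs: "integrable \<Omega> (\<lambda>\<omega>. \<bar>\<beta> * \<omega> j + h\<bar>)"
  using comp_integrable[OF _ int_abs, of \<beta> h j] by simp

lemma comp_int_x: "integrable \<Omega> (\<lambda>\<omega>. \<omega> j)"
  using comp_integrable[OF _ int_x, of j] by simp

lemma comp_mean: "(\<integral>\<omega>. \<omega> j \<partial>\<Omega>) = 0"
  using comp_integral[of "\<lambda>x. x" j] mean by simp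

lemma en_integrable: "integrable \<Omega> (\<lambda>\<omega>. en \<beta> h \<omega> g)"
  unfolding en_def using comp_int_x by (intro Bochner_Integration.integrable_sum Bochner_Integration.integrable_add integrable_mult_right) auto

lemma en_integral: "(\<integral>\<omega>. en \<beta> h \<omega> g \<partial>\<Omega>) = h * real (length g)"
proof -
  have "(\<integral>\<omega>. en \<beta> h \<omega> g \<partial>\<Omega>) = (\<Sum>i=1..length g. \<integral>\<omega>. \<beta> * \<omega> (ps g i) + h \<partial>\<Omega>)"
    unfolding en_def using comp_int_x
    by (intro Bochner_Integration.integral_sum Bochner_Integration.integrable_add integrable_mult_right) auto
  also have "\<dots> = (\<Sum>i=1..length g. h)"
    using comp_int_x comp_mean
    by (intro sum.cong refl) (simp add: Bochner_Integration.integral_add PP.P.prob_space)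
  finally show ?thesis by simp
qed

lemma B_integrable: "integrable \<Omega> (\<lambda>\<omega>. \<Sum>j=1..N. \<bar>\<beta> * \<omega> j + h\<bar>)"
  using comp_int_abs by (intro Bochner_Integration.integrable_sum) auto

lemma B_integral: "(\<integral>\<omega>. (\<Sum>j=1..N. \<bar>\<beta> * \<omega> j + h\<bar>) \<partial>\<Omega>) = real N * (\<integral>x. \<bar>\<beta> * x + h\<bar> \<partial>\<mu>)"
proof -
  have "(\<integral>\<omega>. (\<Sum>j=1..N. \<bar>\<beta> * \<omega> j + h\<bar>) \<partial>\<Omega>) = (\<Sum>j=1..N. \<integral>\<omega>. \<bar>\<beta> * \<omega> j + h\<bar> \<partial>\<Omega>)"
    using comp_int_abs by (intro Bochner_Integration.integral_sum) auto
  also have "\<dots> = (\<Sum>j=1..N. \<integral>x. \<bar>\<beta> * x + h\<bar> \<partial>\<mu>)"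
    by (intro sum.cong refl) (rule comp_integral, simp)
  finally show ?thesis by simp
qed

lemma shift_distr: "distr \<Omega> \<Omega> (\<lambda>\<omega> i. \<omega> (n + i)) = \<Omega>"
  using distr_PiM_reindex[of UNIV "\<lambda>_. \<mu>" "\<lambda>i. n + i" UNIV] prob by (simp add: restrict_UNIV)

lemma shift_meas: "(\<lambda>\<omega> i. \<omega> (n + i)) \<in> measurable \<Omega> \<Omega>"
  by (rule measurable_PiM_single') (auto intro: measurable_component_singleton simp: space_PiM)

lemma shift_integrable:
  fixes F :: "(nat \<Rightarrow> real) \<Rightarrow> real"
  assumes "F \<in> borel_measurable \<Omega>" "integrable \<Omega> F"
  shows "integrable \<Omega> (\<lambda>\<omega>. F (\<lambda>i. \<omega> (n + i)))"
proof -
  have "integrable (distr \<Omega> \<Omega> (\<lambda>\<omega> i. \<omega> (n + i))) F = integrable \<Omega> (\<lambda>\<omega>. F (\<lambda>i. \<omega> (n + i)))"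
    by (rule integrable_distr_eq) (rule shift_meas, rule assms(1))
  then show ?thesis using shift_distr assms(2) by simp
qed

lemma shift_integral:
  fixes F :: "(nat \<Rightarrow> real) \<Rightarrow> real"
  assumes "F \<in> borel_measurable \<Omega>"
  shows "(\<integral>\<omega>. F (\<lambda>i. \<omega> (n + i)) \<partial>\<Omega>) = (\<integral>\<omega>. F \<omega> \<partial>\<Omega>)"
proof -
  have "integral\<^sup>L (distr \<Omega> \<Omega> (\<lambda>\<omega> i. \<omega> (n + i))) F = (\<integral>\<omega>. F (\<lambda>i. \<omega> (n + i)) \<partial>\<Omega>)"
    by (rule integral_distr) (rule shift_meas, rule assms(1))
  then show ?thesis using shift_distr by simp
qed

end



lemma Zf_ge:
  assumes g0: "g0 \<in> comps N" and Gnn: "\<And>m N. 0 \<le> G m N"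
  shows "wK Kp g0 * G (length g0) N * exp (en \<beta> h \<omega> g0) \<le> Zf Kp \<beta> h G N \<omega>"
proof -
  have "wK Kp g0 * G (length g0) N * exp (en \<beta> h \<omega> g0) = wK Kp g0 * exp (en \<beta> h \<omega> g0) * G (length g0) N"
    by simp
  also have "\<dots> \<le> Zf Kp \<beta> h G N \<omega>"
    unfolding Zf_def using g0 Gnn wK_nonneg
    by (intro member_le_sum) (auto simp: finite_comps)
  finally show ?thesis .
qed

lemma Zf_le:
  assumes Gnn: "\<And>m N. 0 \<le> G m N"
  shows "Zf Kp \<beta> h G N \<omega> \<le> (\<Sum>g\<in>comps N. wK Kp g * G (length g) N) * exp (\<Sum>j=1..N. \<bar>\<beta> * \<omega> j + h\<bar>)"
  unfolding Zf_def sum_distrib_right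
proof (rule sum_mono)
  fix g assume g: "g \<in> comps N"
  have e: "exp (en \<beta> h \<omega> g) \<le> exp (\<Sum>j=1..N. \<bar>\<beta> * \<omega> j + h\<bar>)" using en_le_B[OF g] by simp
  have nn: "0 \<le> wK Kp g * G (length g) N" using Gnn[of "length g" N] wK_nonneg[of Kp g] by simp
  have "wK Kp g * exp (en \<beta> h \<omega> g) * G (length g) N = (wK Kp g * G (length g) N) * exp (en \<beta> h \<omega> g)"
    by (simp add: algebra_simps)
  also have "\<dots> \<le> (wK Kp g * G (length g) N) * exp (\<Sum>j=1..N. \<bar>\<beta> * \<omega> j + h\<bar>)"
    by (rule mult_left_mono[OF e nn])
  finally show "wK Kp g * exp (en \<beta> h \<omega> g) * G (length g) N \<le> wK Kp g * G (length g) N * exp (\<Sum>j=1..N. \<bar>\<beta> * \<omega> j + h\<bar>)" .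
qed

context dis
begin

lemma Zf_meas[measurable]: "(\<lambda>\<omega>. Zf Kp \<beta> h G N \<omega>) \<in> borel_measurable \<Omega>"
  unfolding Zf_def en_def by measurable

lemma lnZf:
  fixes G :: "nat \<Rightarrow> nat \<Rightarrow> real"
  assumes Gnn: "\<And>a b. 0 \<le> G a b" and w: "w \<in> comps N" and pos0: "0 < wK Kp w * G (length w) N"
  shows "\<And>\<omega>. 0 < Zf Kp \<beta> h G N \<omega>"
    and "integrable \<Omega> (\<lambda>\<omega>. ln (Zf Kp \<beta> h G N \<omega>))"
    and "ln (wK Kp w * G (length w) N) + h * real (length w) \<le> (\<integral>\<omega>. ln (Zf Kp \<beta> h G N \<omega>) \<partial>\<Omega>)"
    and "(\<integral>\<omega>. ln (Zf Kp \<beta> h G N \<omega>) \<partial>\<Omega>) \<le> ln (\<Sum>g\<in>comps N. wK Kp g * G (length g) N) + real N * (\<integral>x. \<bar>\<beta> * x + h\<bar> \<partial>\<mu>)"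
proof -
  define A0 where "A0 = wK Kp w * G (length w) N"
  define S where "S = (\<Sum>g\<in>comps N. wK Kp g * G (length g) N)"
  define B where "B \<omega> = (\<Sum>j=1..N. \<bar>\<beta> * \<omega> j + h\<bar>)" for \<omega> :: "nat \<Rightarrow> real"
  have A0p: "0 < A0" using pos0 by (simp add: A0_def)
  have "A0 \<le> S" unfolding A0_def S_def using w Gnn wK_nonneg
    by (intro member_le_sum) (auto simp: finite_comps)
  then have Sp: "0 < S" using A0p by simp
  have low: "A0 * exp (en \<beta> h \<omega> w) \<le> Zf Kp \<beta> h G N \<omega>" for \<omega>
    using Zf_ge[OF w Gnn] by (simp add: A0_def)
  show pos: "0 < Zf Kp \<beta> h G N \<omega>" for \<omega>
    using low[of \<omega>] A0p by (meson exp_gt_zero less_le_trans mult_pos_pos)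
  have lowln: "ln A0 + en \<beta> h \<omega> w \<le> ln (Zf Kp \<beta> h G N \<omega>)" for \<omega>
  proof -
    have "ln A0 + en \<beta> h \<omega> w = ln (A0 * exp (en \<beta> h \<omega> w))" using A0p by (simp add: ln_mult)
    also have "\<dots> \<le> ln (Zf Kp \<beta> h G N \<omega>)" using low[of \<omega>] A0p pos[of \<omega>] by simp
    finally show ?thesis .
  qed
  have upln: "ln (Zf Kp \<beta> h G N \<omega>) \<le> ln S + B \<omega>" for \<omega>
  proof -
    have "ln (Zf Kp \<beta> h G N \<omega>) \<le> ln (S * exp (B \<omega>))"
      using Zf_le[OF Gnn, where Kp=Kp and \<beta>=\<beta> and h=h and N=N and \<omega>=\<omega>] pos[of \<omega>] Sp by (simp add: S_def B_def)
    also have "\<dots> = ln S + B \<omega>" using Sp by (simp add: ln_mult)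
    finally show ?thesis .
  qed
  have Bint: "integrable \<Omega> B" unfolding B_def by (rule B_integrable)
  have Bnn: "0 \<le> B \<omega>" for \<omega> unfolding B_def by (simp add: sum_nonneg)
  show int: "integrable \<Omega> (\<lambda>\<omega>. ln (Zf Kp \<beta> h G N \<omega>))"
  proof (rule Bochner_Integration.integrable_bound)
    show "integrable \<Omega> (\<lambda>\<omega>. \<bar>ln A0\<bar> + \<bar>en \<beta> h \<omega> w\<bar> + \<bar>ln S\<bar> + B \<omega>)"
      using Bint en_integrable
      by (intro Bochner_Integration.integrable_add integrable_abs PP.P.integrable_const) auto
    show "(\<lambda>\<omega>. ln (Zf Kp \<beta> h G N \<omega>)) \<in> borel_measurable \<Omega>" by measurable
    show "AE \<omega> in \<Omega>. norm (ln (Zf Kp \<beta> h G N \<omega>)) \<le> norm (\<bar>ln A0\<bar> + \<bar>en \<beta> h \<omega> w\<bar> + \<bar>ln S\<bar> + B \<omega>)"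
    proof (rule AE_I2)
      fix \<omega>
      show "norm (ln (Zf Kp \<beta> h G N \<omega>)) \<le> norm (\<bar>ln A0\<bar> + \<bar>en \<beta> h \<omega> w\<bar> + \<bar>ln S\<bar> + B \<omega>)"
        using lowln[of \<omega>] upln[of \<omega>] Bnn[of \<omega>] by auto
    qed
  qed
  have "ln A0 + h * real (length w) = (\<integral>\<omega>. ln A0 + en \<beta> h \<omega> w \<partial>\<Omega>)"
    using en_integrable en_integral by (simp add: Bochner_Integration.integral_add PP.P.prob_space)
  also have "\<dots> \<le> (\<integral>\<omega>. ln (Zf Kp \<beta> h G N \<omega>) \<partial>\<Omega>)"
    using int en_integrable lowln by (intro integral_mono) auto
  finally show "ln (wK Kp w * G (length w) N) + h * real (length w) \<le> (\<integral>\<omega>. ln (Zf Kp \<beta> h G N \<omega>) \<partial>\<Omega>)"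
    by (simp add: A0_def)
  have "(\<integral>\<omega>. ln (Zf Kp \<beta> h G N \<omega>) \<partial>\<Omega>) \<le> (\<integral>\<omega>. ln S + B \<omega> \<partial>\<Omega>)"
    using int Bint upln by (intro integral_mono) auto
  also have "\<dots> = ln S + (\<integral>\<omega>. B \<omega> \<partial>\<Omega>)"
    by (subst Bochner_Integration.integral_add) (auto simp: Bint PP.P.prob_space)
  also have "\<dots> = ln S + real N * (\<integral>x. \<bar>\<beta> * x + h\<bar> \<partial>\<mu>)"
    unfolding B_def by (simp only: B_integral)
  finally show "(\<integral>\<omega>. ln (Zf Kp \<beta> h G N \<omega>) \<partial>\<Omega>) \<le> ln (\<Sum>g\<in>comps N. wK Kp g * G (length g) N) + real N * (\<integral>x. \<bar>\<beta> * x + h\<bar> \<partial>\<mu>)"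
    by (simp add: S_def)
qed

lemma super_E:
  fixes G1 G2 G3 :: "nat \<Rightarrow> nat \<Rightarrow> real"
  assumes G1: "\<And>m N. 0 \<le> G1 m N" and G2: "\<And>m N. 0 \<le> G2 m N" and G3: "\<And>m N. 0 \<le> G3 m N"
    and G: "\<And>m1 m2. 1 \<le> m1 \<Longrightarrow> m1 \<le> N1 \<Longrightarrow> 1 \<le> m2 \<Longrightarrow> m2 \<le> N2 \<Longrightarrow> G1 m1 N1 * G2 m2 N2 \<le> G3 (m1 + m2) (N1 + N2)"
    and N1: "N1 \<ge> 1" and N2: "N2 \<ge> 1"
    and g1: "g1 \<in> comps N1" and p1: "0 < wK Kp g1 * G1 (length g1) N1"
    and g2: "g2 \<in> comps N2" and p2: "0 < wK Kp g2 * G2 (length g2) N2"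
  shows "(\<integral>\<omega>. ln (Zf Kp \<beta> h G1 N1 \<omega>) \<partial>\<Omega>) + (\<integral>\<omega>. ln (Zf Kp \<beta> h G2 N2 \<omega>) \<partial>\<Omega>)
     \<le> (\<integral>\<omega>. ln (Zf Kp \<beta> h G3 (N1 + N2) \<omega>) \<partial>\<Omega>)"
proof -
  have g3: "g1 @ g2 \<in> comps (N1 + N2)" using g1 g2 by (auto simp: comps_def)
  have "0 < (wK Kp g1 * G1 (length g1) N1) * (wK Kp g2 * G2 (length g2) N2)" using p1 p2 by simp
  also have "\<dots> = wK Kp (g1 @ g2) * (G1 (length g1) N1 * G2 (length g2) N2)" by (simp add: wK_append)
  also have "\<dots> \<le> wK Kp (g1 @ g2) * G3 (length (g1 @ g2)) (N1 + N2)"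
    using comps_length_pos[OF g1 N1] comps_length_pos[OF g2 N2] comps_length_le[OF g1] comps_length_le[OF g2]
    by (intro mult_left_mono wK_nonneg) (auto intro: G)
  finally have p3: "0 < wK Kp (g1 @ g2) * G3 (length (g1 @ g2)) (N1 + N2)" .
  note L1 = lnZf[where G=G1 and w=g1 and N=N1 and Kp=Kp and \<beta>=\<beta> and h=h, OF G1 g1 p1]
  note L2 = lnZf[where G=G2 and w=g2 and N=N2 and Kp=Kp and \<beta>=\<beta> and h=h, OF G2 g2 p2]
  note L3 = lnZf[where G=G3 and w="g1 @ g2" and N="N1 + N2" and Kp=Kp and \<beta>=\<beta> and h=h, OF G3 g3 p3]
  define F2 where "F2 = (\<lambda>\<omega>. ln (Zf Kp \<beta> h G2 N2 \<omega>))"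
  have F2m: "F2 \<in> borel_measurable \<Omega>" unfolding F2_def by measurable
  have sh_int: "integrable \<Omega> (\<lambda>\<omega>. F2 (\<lambda>i. \<omega> (N1 + i)))"
    by (rule shift_integrable[OF F2m]) (use L2(2) in \<open>simp add: F2_def\<close>)
  have sh_eq: "(\<integral>\<omega>. F2 (\<lambda>i. \<omega> (N1 + i)) \<partial>\<Omega>) = (\<integral>\<omega>. F2 \<omega> \<partial>\<Omega>)"
    by (rule shift_integral[OF F2m])
  have pw: "ln (Zf Kp \<beta> h G1 N1 \<omega>) + F2 (\<lambda>i. \<omega> (N1 + i)) \<le> ln (Zf Kp \<beta> h G3 (N1 + N2) \<omega>)" for \<omega>
  proof -
    have a: "0 < Zf Kp \<beta> h G1 N1 \<omega>" by (rule L1(1))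
    have b: "0 < Zf Kp \<beta> h G2 N2 (\<lambda>i. \<omega> (N1 + i))" by (rule L2(1))
    have "ln (Zf Kp \<beta> h G1 N1 \<omega>) + F2 (\<lambda>i. \<omega> (N1 + i)) = ln (Zf Kp \<beta> h G1 N1 \<omega> * Zf Kp \<beta> h G2 N2 (\<lambda>i. \<omega> (N1 + i)))"
      using a b by (simp add: F2_def ln_mult)
    also have "\<dots> \<le> ln (Zf Kp \<beta> h G3 (N1 + N2) \<omega>)"
      using a b Zf_super[of G1 G2 G3 N1 N2 Kp \<beta> h \<omega>, OF G1 G2 G3 G N1 N2]
      by (subst ln_le_cancel_iff) (auto intro: mult_pos_pos L3(1))
    finally show ?thesis .
  qed
  have "(\<integral>\<omega>. ln (Zf Kp \<beta> h G1 N1 \<omega>) \<partial>\<Omega>) + (\<integral>\<omega>. ln (Zf Kp \<beta> h G2 N2 \<omega>) \<partial>\<Omega>)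
      = (\<integral>\<omega>. ln (Zf Kp \<beta> h G1 N1 \<omega>) + F2 (\<lambda>i. \<omega> (N1 + i)) \<partial>\<Omega>)"
    using L1(2) sh_int sh_eq by (simp add: Bochner_Integration.integral_add F2_def)
  also have "\<dots> \<le> (\<integral>\<omega>. ln (Zf Kp \<beta> h G3 (N1 + N2) \<omega>) \<partial>\<Omega>)"
    using L1(2) sh_int L3(2) pw by (intro integral_mono Bochner_Integration.integrable_add) auto
  finally show ?thesis .
qed

end



lemma fekete_iter:
  fixes s :: "nat \<Rightarrow> real"
  assumes super: "\<And>n m. n \<ge> n0 \<Longrightarrow> m \<ge> n0 \<Longrightarrow> s n + s m \<le> s (n + m)"
    and M: "M \<ge> n0" and r: "r \<ge> n0"
  shows "real k * s M + s r \<le> s (k * M + r)"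
proof (induction k)
  case 0 then show ?case by simp
next
  case (Suc k)
  have "s M + s (k * M + r) \<le> s (M + (k * M + r))" using M r by (intro super) auto
  then show ?case using Suc by (simp add: algebra_simps)
qed

lemma fekete_lower:
  fixes s :: "nat \<Rightarrow> real"
  assumes super: "\<And>n m. n \<ge> n0 \<Longrightarrow> m \<ge> n0 \<Longrightarrow> s n + s m \<le> s (n + m)"
    and M: "M \<ge> n0" "M \<ge> 1" and eps: "\<epsilon> > 0"
  shows "eventually (\<lambda>N. s M / real M - \<epsilon> \<le> s N / real N) sequentially"
proof -
  define x where "x = s M / real M"
  define A where "A = (\<Sum>r<n0 + M. \<bar>s r\<bar>)"
  define C where "C = real (n0 + M) * \<bar>x\<bar> + A"
  have Mp: "real M > 0" using M by simp
  have Cnn: "0 \<le> C" unfolding C_def A_def by (simp add: sum_nonneg)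
  have key: "real N * x - C \<le> s N" if N: "N \<ge> n0" for N
  proof -
    define k where "k = (N - n0) div M"
    define r where "r = n0 + (N - n0) mod M"
    have Nkr: "N = k * M + r" using N by (simp add: k_def r_def)
    have rge: "r \<ge> n0" by (simp add: r_def)
    have rlt: "r < n0 + M" using M by (simp add: r_def)
    have "\<bar>s r\<bar> \<le> A" unfolding A_def using rlt by (intro member_le_sum) auto
    then have sr: "- A \<le> s r" by simp
    have it: "real k * s M + s r \<le> s N" using fekete_iter[OF super M(1) rge] Nkr by simp
    have sM: "s M = real M * x" using Mp by (simp add: x_def)
    have "real N * x - C = real k * s M + real r * x - C" using Nkr sM by (simp add: algebra_simps)
    also have "\<dots> \<le> real k * s M + real r * x - real r * \<bar>x\<bar> - A"
    proof -
      have "real r * \<bar>x\<bar> \<le> real (n0 + M) * \<bar>x\<bar>" using rlt by (intro mult_right_mono) auto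
      then show ?thesis unfolding C_def by simp
    qed
    also have "\<dots> \<le> real k * s M - A"
    proof -
      have "real r * x \<le> real r * \<bar>x\<bar>" by (intro mult_left_mono) auto
      then show ?thesis by simp
    qed
    also have "\<dots> \<le> s N" using it sr by simp
    finally show ?thesis .
  qed
  show ?thesis unfolding eventually_sequentially
  proof (intro exI allI impI)
    fix N assume N: "N \<ge> max (max n0 1) (nat \<lceil>C / \<epsilon>\<rceil> + 1)"
    then have Nn0: "N \<ge> n0" and Npos: "real N > 0" and NC: "real N > C / \<epsilon>" by linarith+
    have "C / real N < \<epsilon>" using NC eps Npos by (simp add: field_simps)
    moreover have "x - C / real N \<le> s N / real N"
    proof -
      have "(real N * x - C) / real N \<le> s N / real N" using key[OF Nn0] Npos by (intro divide_right_mono) auto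
      moreover have "(real N * x - C) / real N = x - C / real N" using Npos by (simp add: diff_divide_distrib)
      ultimately show ?thesis by simp
    qed
    ultimately show "s M / real M - \<epsilon> \<le> s N / real N" unfolding x_def by linarith
  qed
qed

lemma prod_list_pos: "\<forall>x\<in>set xs. 0 < (x::real) \<Longrightarrow> 0 < prod_list xs"
  by (induction xs) auto

definition wit :: "nat \<Rightarrow> nat \<Rightarrow> nat list" where
  "wit m N = replicate (m - 1) 1 @ [N - m + 1]"

lemma wit_props:
  assumes "1 \<le> m" "m \<le> N" and Kpos: "\<And>n. n \<ge> 1 \<Longrightarrow> pmf Kp n > 0"
  shows "wit m N \<in> comps N" "length (wit m N) = m" "wK Kp (wit m N) > 0"
proof -
  show "wit m N \<in> comps N" using assms(1,2) by (auto simp: wit_def comps_def sum_list_replicate)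
  show "length (wit m N) = m" using assms(1) by (simp add: wit_def)
  have "\<forall>x\<in>set (map (pmf Kp) (wit m N)). 0 < x" using Kpos by (auto simp: wit_def)
  then show "wK Kp (wit m N) > 0" unfolding wK_def by (rule prod_list_pos)
qed



locale main = dis \<mu> for \<mu> :: "real measure" +
  fixes Kp :: "nat pmf" and C\<^sub>K \<alpha> :: real and H :: "real \<Rightarrow> ereal" and Q :: "nat \<Rightarrow> nat \<Rightarrow> real"
    and \<beta> h :: real
  assumes K_zero: "pmf Kp 0 = 0"
    and K_pos: "\<And>n. n \<ge> 1 \<Longrightarrow> pmf Kp n > 0"
    and \<alpha>_pos: "\<alpha> > 0" and CK_pos: "C\<^sub>K > 0"
    and K_tail: "(\<lambda>n. pmf Kp n) \<sim>[at_top] (\<lambda>n. C\<^sub>K * real n powr (-(1 + \<alpha>)))"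
    and H_concave: "ereal_concave_on {0..1} H"
    and H_not_pinf: "\<And>x. x \<in> {0..1} \<Longrightarrow> H x \<noteq> \<infinity>"
    and H_real: "\<And>x. x \<in> {0<..<1} \<Longrightarrow> H x \<noteq> -\<infinity>"
    and H_cont: "continuous_on {0..1} H"
    and Q_nonneg: "\<And>m N. Q m N \<ge> 0"
    and Q_upper: "\<And>b. b > 0 \<Longrightarrow> \<exists>c. \<forall>N m. m \<le> N \<longrightarrow> Q m N \<le> c * exp (b * real N)"
    and Q_lower: "\<And>u v b. 0 < u \<Longrightarrow> u < v \<Longrightarrow> v < 1 \<Longrightarrow> b > 0 \<Longrightarrow>
        \<exists>c>0. \<forall>N m. 1 \<le> m \<and> m \<le> N \<and> u \<le> real m / real N \<and> real m / real N \<le> v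
          \<longrightarrow> Q m N \<ge> c * exp (- b * real N)"
begin

definition "aa N = (\<integral>\<omega>. ln (Zf Kp \<beta> h (Psi_fun Q H) N \<omega>) \<partial>\<Omega>)"
definition "bb N = (\<integral>\<omega>. ln (Zf Kp \<beta> h (EH H 0 1) N \<omega>) \<partial>\<Omega>)"
definition "cc u v N = (\<integral>\<omega>. ln (Zf Kp \<beta> h (EH H u v) N \<omega>) \<partial>\<Omega>)"

lemma Hmax: "\<exists>Hm\<ge>0. \<forall>x\<in>{0..1}. H x \<le> ereal Hm"
proof -
  obtain x0 where x0: "x0 \<in> {0..1}" "\<forall>y\<in>{0..1}. H y \<le> H x0"
    using continuous_attains_sup[OF compact_Icc _ H_cont] by auto
  define Hm where "Hm = max 0 (real_of_ereal (H x0))"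
  have "H x0 \<le> ereal Hm"
    using H_not_pinf[OF x0(1)] by (cases "H x0") (auto simp: Hm_def)
  then show ?thesis using x0 by (intro exI[of _ Hm]) (auto simp: Hm_def intro: order_trans)
qed

lemma EH_le:
  assumes Hm: "\<forall>x\<in>{0..1}. H x \<le> ereal Hm" and mN: "m \<le> N"
  shows "EH H u v m N \<le> exp (real N * Hm)"
proof (cases "u \<le> real m / real N \<and> real m / real N \<le> v \<and> H (real m / real N) \<noteq> -\<infinity>")
  case True
  have x01: "real m / real N \<in> {0..1}" using mN by (cases "N = 0") (auto simp: field_simps)
  have hle: "H (real m / real N) \<le> ereal Hm" using Hm x01 by blast
  have "real_of_ereal (H (real m / real N)) \<le> Hm"
    using hle True H_not_pinf[OF x01] by (cases "H (real m / real N)") auto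
  then have "real N * real_of_ereal (H (real m / real N)) \<le> real N * Hm" by (intro mult_left_mono) auto
  then show ?thesis using True by (simp add: EH_def)
qed (auto simp: EH_def)

lemma wsum: assumes N: "N \<ge> 1" shows "(\<Sum>g\<in>comps N. wK Kp g) \<le> 1"
proof -
  interpret P: product_prob_space "\<lambda>_. measure_pmf Kp" "UNIV :: nat set" by unfold_locales
  have "partition_fun Kp (\<lambda>_ _. 1) 0 0 (\<lambda>_. 0) N = (\<Sum>g\<in>comps N. wK Kp g)"
    using partition_eq[OF K_zero N, of "\<lambda>_ _. 1" 0 0 "\<lambda>_. 0"] by (simp add: en_def)
  moreover have "partition_fun Kp (\<lambda>_ _. 1) 0 0 (\<lambda>_. 0) N \<le> 1"
  proof -
    have "partition_fun Kp (\<lambda>_ _. 1) 0 0 (\<lambda>_. 0) N = (\<integral>T. renewal_delta T N \<partial>renewal_law Kp)"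
      by (simp add: partition_fun_def)
    also have "\<dots> \<le> 1" unfolding renewal_law_def
    proof (rule prob_space.integral_le_const)
      show "prob_space (PiM UNIV (\<lambda>_. measure_pmf Kp))" by (rule prob_space_PiM) (simp add: prob_space_measure_pmf)
      show "integrable (PiM UNIV (\<lambda>_. measure_pmf Kp)) (\<lambda>T. renewal_delta T N)"
      proof (rule finite_measure.integrable_const_bound[where B=1])
        show "finite_measure (PiM UNIV (\<lambda>_. measure_pmf Kp))"
          by (rule prob_space.finite_measure) (rule prob_space_PiM, simp add: prob_space_measure_pmf)
        show "AE T in PiM UNIV (\<lambda>_. measure_pmf Kp). norm (renewal_delta T N) \<le> 1"
          by (simp add: renewal_delta_def)
        show "(\<lambda>T. renewal_delta T N) \<in> borel_measurable (PiM UNIV (\<lambda>_. measure_pmf Kp))"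
          by (rule renewal_measurable)
      qed
    qed (auto simp: renewal_delta_def)
    finally show ?thesis .
  qed
  ultimately show ?thesis by simp
qed

lemma EH_wit:
  assumes "1 \<le> m" "m < N" "u \<le> real m / real N" "real m / real N \<le> v"
  shows "0 < wK Kp (wit m N) * EH H u v (length (wit m N)) N"
proof -
  have "real m / real N \<in> {0<..<1}" using assms(1,2) by (auto simp: field_simps)
  then have "H (real m / real N) \<noteq> -\<infinity>" by (rule H_real)
  then have "0 < EH H u v m N" using assms by (simp add: EH_def)
  moreover have "0 < wK Kp (wit m N)" using wit_props(3)[of m N Kp] assms K_pos by auto
  moreover have "length (wit m N) = m" using wit_props(2)[of m N Kp] assms K_pos by auto
  ultimately show ?thesis by simp
qed

lemma EH0_wit: "N \<ge> 2 \<Longrightarrow> 0 < wK Kp (wit 1 N) * EH H 0 1 (length (wit 1 N)) N"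
  by (rule EH_wit) (auto simp: field_simps)

lemma wit_in: "1 \<le> m \<Longrightarrow> m \<le> N \<Longrightarrow> wit m N \<in> comps N"
  using wit_props(1)[of m N Kp] K_pos by auto

lemma bb_upper: "\<exists>C. \<forall>N\<ge>2. bb N \<le> real N * C"
proof -
  obtain Hm where Hm0: "Hm \<ge> 0" and Hm: "\<forall>x\<in>{0..1}. H x \<le> ereal Hm" using Hmax by auto
  define c1 where "c1 = (\<integral>x. \<bar>\<beta> * x + h\<bar> \<partial>\<mu>)"
  have "bb N \<le> real N * (Hm + c1)" if N: "N \<ge> 2" for N
  proof -
    have w: "wit 1 N \<in> comps N" using N by (intro wit_in) auto
    note L = lnZf[where G="EH H 0 1" and w="wit 1 N" and N=N and Kp=Kp and \<beta>=\<beta> and h=h, OF EH_nonneg w EH0_wit[OF N]]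
    define S where "S = (\<Sum>g\<in>comps N. wK Kp g * EH H 0 1 (length g) N)"
    have "0 < wK Kp (wit 1 N) * EH H 0 1 (length (wit 1 N)) N" by (rule EH0_wit[OF N])
    also have "\<dots> \<le> S" unfolding S_def using w wK_nonneg EH_nonneg
      by (intro member_le_sum) (auto simp: finite_comps)
    finally have Sp: "0 < S" .
    have "S \<le> (\<Sum>g\<in>comps N. wK Kp g * exp (real N * Hm))" unfolding S_def
      using EH_le[OF Hm comps_length_le] wK_nonneg by (intro sum_mono mult_left_mono) auto
    also have "\<dots> = (\<Sum>g\<in>comps N. wK Kp g) * exp (real N * Hm)" by (simp add: sum_distrib_right)
    also have "\<dots> \<le> exp (real N * Hm)" using wsum[of N] N by (intro mult_left_le_one_le) (auto intro: sum_nonneg wK_nonneg)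
    finally have "S \<le> exp (real N * Hm)" .
    then have "ln S \<le> real N * Hm" using Sp by (metis exp_gt_zero ln_exp ln_le_cancel_iff)
    then show ?thesis using L(4) unfolding bb_def S_def c1_def by (simp add: algebra_simps)
  qed
  then show ?thesis by blast
qed

lemma bb_super: assumes N1: "N1 \<ge> 2" and N2: "N2 \<ge> 2" shows "bb N1 + bb N2 \<le> bb (N1 + N2)"
proof -
  have w1: "wit 1 N1 \<in> comps N1" using N1 by (intro wit_in) auto
  have w2: "wit 1 N2 \<in> comps N2" using N2 by (intro wit_in) auto
  show ?thesis unfolding bb_def
    by (rule super_E[of "EH H 0 1" "EH H 0 1" "EH H 0 1" N1 N2 "wit 1 N1" Kp "wit 1 N2" \<beta> h,
          OF EH_nonneg EH_nonneg EH_nonneg _ _ _ w1 EH0_wit[OF N1] w2 EH0_wit[OF N2]],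
        rule EH_super[OF H_concave H_not_pinf]) (use N1 N2 in \<open>auto intro!: dens_convex\<close>)
qed


lemma half_wit:
  assumes N: "N \<ge> 4"
  shows "1 \<le> N div 2" "N div 2 < N" "1/4 \<le> real (N div 2) / real N" "real (N div 2) / real N \<le> 3/4"
proof -
  define m where "m = N div 2"
  have a: "2 * m \<le> N" "N \<le> 2 * m + 1" by (auto simp: m_def)
  have m2: "m \<ge> 2" using N by (simp add: m_def)
  show "1 \<le> N div 2" "N div 2 < N" using m2 N a by (auto simp: m_def[symmetric])
  have Np: "real N > 0" using N by simp
  have "real N \<le> 4 * real m" using a m2 by linarith
  then show "1/4 \<le> real (N div 2) / real N" using Np by (simp add: m_def[symmetric] field_simps)
  have "4 * real m \<le> 3 * real N" using a by linarith
  then show "real (N div 2) / real N \<le> 3/4" using Np by (simp add: m_def[symmetric] field_simps)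
qed

lemma EHuv_wit:
  assumes N: "N \<ge> 4" and u: "u \<le> 1/4" and v: "3/4 \<le> v"
  shows "0 < wK Kp (wit (N div 2) N) * EH H u v (length (wit (N div 2) N)) N"
  by (rule EH_wit) (use half_wit[OF N] u v in linarith)+

lemma cc_super:
  assumes u: "u \<le> 1/4" and v: "3/4 \<le> v" and N1: "N1 \<ge> 4" and N2: "N2 \<ge> 4"
  shows "cc u v N1 + cc u v N2 \<le> cc u v (N1 + N2)"
proof -
  have w1: "wit (N1 div 2) N1 \<in> comps N1" using half_wit[OF N1] by (intro wit_in) auto
  have w2: "wit (N2 div 2) N2 \<in> comps N2" using half_wit[OF N2] by (intro wit_in) auto
  have cond: "EH H u v m1 N1 * EH H u v m2 N2 \<le> EH H u v (m1 + m2) (N1 + N2)"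
    if "1 \<le> m1" "m1 \<le> N1" "1 \<le> m2" "m2 \<le> N2" for m1 m2
    apply (rule EH_super[OF H_concave _ that])
     apply (erule H_not_pinf)
    apply (rule dens_convex)
    using N1 N2 by auto
  show ?thesis unfolding cc_def
    by (rule super_E[of "EH H u v" "EH H u v" "EH H u v" N1 N2 "wit (N1 div 2) N1" Kp "wit (N2 div 2) N2" \<beta> h,
          OF EH_nonneg EH_nonneg EH_nonneg cond _ _ w1 EHuv_wit[OF N1 u v] w2 EHuv_wit[OF N2 u v]])
       (use N1 N2 in auto)
qed

definition "c0 = ln (pmf Kp 2 * EH H 0 1 1 2) + h"

lemma wit12: "wit 1 2 = [2]" by (simp add: wit_def)

lemma trick:
  assumes M: "M \<ge> 2"
  shows "bb M + c0 \<le> cc (1 / real (M + 2)) (real (M + 1) / real (M + 2)) (M + 2)"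
proof -
  define u where "u = 1 / real (M + 2)"
  define v where "v = real (M + 1) / real (M + 2)"
  define G2 where "G2 = (\<lambda>m N. if m = 1 then EH H 0 1 m N else 0)"
  have G2nn: "0 \<le> G2 m N" for m N by (simp add: G2_def EH_nonneg)
  have w1: "wit 1 M \<in> comps M" using M by (intro wit_in) auto
  have w2: "[2] \<in> comps 2" by (simp add: comps_def)
  have p2: "0 < wK Kp [2] * G2 (length [2]) 2"
    using EH0_wit[of 2] by (simp add: wit_def G2_def eval_nat_numeral)
  have cond: "EH H 0 1 m1 M * G2 m2 2 \<le> EH H u v (m1 + m2) (M + 2)"
    if m1: "1 \<le> m1" "m1 \<le> M" and m2: "1 \<le> m2" "m2 \<le> 2" for m1 m2
  proof (cases "m2 = 1")
    case True
    have "EH H 0 1 m1 M * EH H 0 1 m2 2 \<le> EH H u v (m1 + m2) (M + 2)"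
    proof (rule EH_super[OF H_concave H_not_pinf m1 m2])
      have s1: "1 \<le> real (m1 + m2)" using m1 True by simp
      have s2: "real (m1 + m2) \<le> real (M + 1)" using m1 True by simp
      have "1 / real (M + 2) \<le> real (m1 + m2) / real (M + 2)" by (rule divide_right_mono[OF s1]) simp
      moreover have "real (m1 + m2) / real (M + 2) \<le> real (M + 1) / real (M + 2)" by (rule divide_right_mono[OF s2]) simp
      ultimately show "u \<le> real (m1 + m2) / real (M + 2) \<and> real (m1 + m2) / real (M + 2) \<le> v"
        unfolding u_def v_def by blast
    qed
    then show ?thesis using True by (simp add: G2_def)
  next
    case False
    then show ?thesis by (simp add: G2_def EH_nonneg)
  qed
  have "bb M + (\<integral>\<omega>. ln (Zf Kp \<beta> h G2 2 \<omega>) \<partial>\<Omega>) \<le> cc u v (M + 2)"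
    unfolding bb_def cc_def
    by (rule super_E[of "EH H 0 1" G2 "EH H u v" M 2 "wit 1 M" Kp "[2]" \<beta> h,
          OF EH_nonneg G2nn EH_nonneg cond _ _ w1 EH0_wit[OF M] w2 p2]) (use M in auto)
  moreover have "c0 \<le> (\<integral>\<omega>. ln (Zf Kp \<beta> h G2 2 \<omega>) \<partial>\<Omega>)"
    using lnZf(3)[where G=G2 and w="[2]" and N=2 and Kp=Kp and \<beta>=\<beta> and h=h, OF G2nn w2 p2]
    by (simp add: c0_def G2_def wK_def)
  ultimately show ?thesis unfolding u_def v_def by simp
qed

lemma Psi_nonneg: "0 \<le> Psi_fun Q H m N"
  using Q_nonneg by (simp add: Psi_fun_def)

lemma Psi_wit:
  assumes N: "N \<ge> 4"
  shows "0 < wK Kp (wit (N div 2) N) * Psi_fun Q H (length (wit (N div 2) N)) N"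
proof -
  define m where "m = N div 2"
  note hw = half_wit[OF N, folded m_def]
  obtain c where c: "c > 0" and cQ: "\<forall>N m. 1 \<le> m \<and> m \<le> N \<and> 1/4 \<le> real m / real N \<and> real m / real N \<le> 3/4
          \<longrightarrow> Q m N \<ge> c * exp (- 1 * real N)"
    using Q_lower[of "1/4" "3/4" 1] by auto
  have "Q m N \<ge> c * exp (- 1 * real N)" using cQ hw by auto
  moreover have "0 < c * exp (- 1 * real N)" using c by simp
  ultimately have Qp: "0 < Q m N" by linarith
  have "real m / real N \<in> {0<..<1}" using hw by (auto simp: field_simps)
  then have "H (real m / real N) \<noteq> -\<infinity>" by (rule H_real)
  then have "0 < Psi_fun Q H m N" using Qp by (simp add: Psi_fun_def)
  moreover have "0 < wK Kp (wit m N)" using wit_props(3)[of m N Kp] hw K_pos by auto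
  moreover have "length (wit m N) = m" using wit_props(2)[of m N Kp] hw K_pos by auto
  ultimately show ?thesis by (simp add: m_def)
qed

lemma aa_upper:
  assumes b: "b > 0"
  shows "\<exists>C. \<forall>N\<ge>4. aa N \<le> C + b * real N + bb N"
proof -
  obtain c where c: "\<forall>N m. m \<le> N \<longrightarrow> Q m N \<le> c * exp (b * real N)" using Q_upper[OF b] by auto
  define c' where "c' = max c 1"
  have c'p: "c' > 0" by (simp add: c'_def)
  have "aa N \<le> ln c' + b * real N + bb N" if N: "N \<ge> 4" for N
  proof -
    have w: "wit (N div 2) N \<in> comps N" using half_wit[OF N] by (intro wit_in) auto
    have w0: "wit 1 N \<in> comps N" using N by (intro wit_in) auto
    have N2: "N \<ge> 2" using N by simp
    note LA = lnZf[where G="Psi_fun Q H" and w="wit (N div 2) N" and N=N and Kp=Kp and \<beta>=\<beta> and h=h, OF Psi_nonneg w Psi_wit[OF N]]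
    note LB = lnZf[where G="EH H 0 1" and w="wit 1 N" and N=N and Kp=Kp and \<beta>=\<beta> and h=h, OF EH_nonneg w0 EH0_wit[OF N2]]
    define K where "K = c' * exp (b * real N)"
    have Kp: "K > 0" using c'p by (simp add: K_def)
    have pw: "ln (Zf Kp \<beta> h (Psi_fun Q H) N \<omega>) \<le> ln c' + b * real N + ln (Zf Kp \<beta> h (EH H 0 1) N \<omega>)" for \<omega>
    proof -
      have "Zf Kp \<beta> h (Psi_fun Q H) N \<omega> \<le> Zf Kp \<beta> h (\<lambda>m N'. K * EH H 0 1 m N') N \<omega>"
      proof (rule Zf_mono)
        fix m assume m: "1 \<le> m" "m \<le> N"
        have "c * exp (b * real N) \<le> c' * exp (b * real N)"
          by (rule mult_right_mono) (auto simp: c'_def)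
        then have "Q m N \<le> c' * exp (b * real N)"
          using c m by (meson order_trans)
        then show "Psi_fun Q H m N \<le> K * EH H 0 1 m N"
          unfolding K_def using m N by (intro Psi_upper) auto
      qed (use N in auto)
      also have "\<dots> = K * Zf Kp \<beta> h (EH H 0 1) N \<omega>" by (rule Zf_scale)
      finally have le: "Zf Kp \<beta> h (Psi_fun Q H) N \<omega> \<le> K * Zf Kp \<beta> h (EH H 0 1) N \<omega>" .
      have "ln (Zf Kp \<beta> h (Psi_fun Q H) N \<omega>) \<le> ln (K * Zf Kp \<beta> h (EH H 0 1) N \<omega>)"
        using le LA(1)[of \<omega>] LB(1)[of \<omega>] Kp by (subst ln_le_cancel_iff) auto
      also have "\<dots> = ln c' + b * real N + ln (Zf Kp \<beta> h (EH H 0 1) N \<omega>)"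
        using Kp LB(1)[of \<omega>] c'p by (simp add: K_def ln_mult)
      finally show ?thesis .
    qed
    have "aa N \<le> (\<integral>\<omega>. ln c' + b * real N + ln (Zf Kp \<beta> h (EH H 0 1) N \<omega>) \<partial>\<Omega>)"
      unfolding aa_def using LA(2) LB(2) pw by (intro integral_mono) auto
    also have "\<dots> = ln c' + b * real N + bb N"
      unfolding bb_def using LB(2) by (simp add: PP.P.prob_space)
    finally show ?thesis .
  qed
  then show ?thesis by blast
qed

lemma aa_lower:
  assumes u: "0 < u" "u \<le> 1/4" and v: "3/4 \<le> v" "v < 1" and b: "b > 0"
  shows "\<exists>C. \<forall>N\<ge>4. C - b * real N + cc u v N \<le> aa N"
proof -
  obtain c where c: "c > 0" and cQ: "\<forall>N m. 1 \<le> m \<and> m \<le> N \<and> u \<le> real m / real N \<and> real m / real N \<le> v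
          \<longrightarrow> Q m N \<ge> c * exp (- b * real N)"
    using Q_lower[OF u(1) _ v(2) b] u v by fastforce
  have "ln c - b * real N + cc u v N \<le> aa N" if N: "N \<ge> 4" for N
  proof -
    have w: "wit (N div 2) N \<in> comps N" using half_wit[OF N] by (intro wit_in) auto
    note LA = lnZf[where G="Psi_fun Q H" and w="wit (N div 2) N" and N=N and Kp=Kp and \<beta>=\<beta> and h=h, OF Psi_nonneg w Psi_wit[OF N]]
    note LC = lnZf[where G="EH H u v" and w="wit (N div 2) N" and N=N and Kp=Kp and \<beta>=\<beta> and h=h, OF EH_nonneg w EHuv_wit[OF N u(2) v(1)]]
    define K where "K = c * exp (- b * real N)"
    have Kp: "K > 0" using c by (simp add: K_def)
    have pw: "ln c - b * real N + ln (Zf Kp \<beta> h (EH H u v) N \<omega>) \<le> ln (Zf Kp \<beta> h (Psi_fun Q H) N \<omega>)" for \<omega>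
    proof -
      have "K * Zf Kp \<beta> h (EH H u v) N \<omega> = Zf Kp \<beta> h (\<lambda>m N'. K * EH H u v m N') N \<omega>" by (rule Zf_scale[symmetric])
      also have "\<dots> \<le> Zf Kp \<beta> h (Psi_fun Q H) N \<omega>"
      proof (rule Zf_mono)
        fix m assume m: "1 \<le> m" "m \<le> N"
        show "K * EH H u v m N \<le> Psi_fun Q H m N"
          unfolding K_def using m cQ by (intro Psi_lower Q_nonneg) auto
      qed (use N in auto)
      finally have le: "K * Zf Kp \<beta> h (EH H u v) N \<omega> \<le> Zf Kp \<beta> h (Psi_fun Q H) N \<omega>" .
      have "ln c - b * real N + ln (Zf Kp \<beta> h (EH H u v) N \<omega>) = ln (K * Zf Kp \<beta> h (EH H u v) N \<omega>)"
        using Kp LC(1)[of \<omega>] c by (simp add: K_def ln_mult)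
      also have "\<dots> \<le> ln (Zf Kp \<beta> h (Psi_fun Q H) N \<omega>)"
        using le LA(1)[of \<omega>] LC(1)[of \<omega>] Kp by (subst ln_le_cancel_iff) auto
      finally show ?thesis .
    qed
    have "ln c - b * real N + cc u v N = (\<integral>\<omega>. ln c - b * real N + ln (Zf Kp \<beta> h (EH H u v) N \<omega>) \<partial>\<Omega>)"
      unfolding cc_def using LC(2) by (simp add: PP.P.prob_space)
    also have "\<dots> \<le> aa N"
      unfolding aa_def using LA(2) LC(2) pw by (intro integral_mono) auto
    finally show ?thesis .
  qed
  then show ?thesis by blast
qed

end



context main
begin

lemma bb_mult: assumes M: "M \<ge> 2" shows "k \<ge> 1 \<Longrightarrow> real k * bb M \<le> bb (k * M)"
proof (induction k)
  case 0 then show ?case by simp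
next
  case (Suc k)
  show ?case
  proof (cases "k = 0")
    case True then show ?thesis by simp
  next
    case False
    then have IH: "real k * bb M \<le> bb (k * M)" using Suc by simp
    have kM: "k * M \<ge> 2" using M False by (cases k) auto
    have "bb (k * M) + bb M \<le> bb (k * M + M)" using M kM by (intro bb_super)
    then show ?thesis using IH by (simp add: algebra_simps)
  qed
qed

definition "LL = Sup ((\<lambda>N. bb N / real N) ` {2..})"

lemma bdd: "bdd_above ((\<lambda>N. bb N / real N) ` {2..})"
proof -
  obtain C where C: "\<forall>N\<ge>2. bb N \<le> real N * C" using bb_upper by auto
  have "bb N / real N \<le> C" if "N \<ge> 2" for N
    using C that by (simp add: divide_le_eq mult.commute)
  then show ?thesis by (auto simp: bdd_above_def)
qed

lemma bbL: "N \<ge> 2 \<Longrightarrow> bb N / real N \<le> LL"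
  unfolding LL_def by (rule cSup_upper[OF _ bdd]) auto

lemma upper_ev:
  assumes e: "\<epsilon> > 0"
  shows "eventually (\<lambda>N. aa N / real N \<le> LL + \<epsilon>) sequentially"
proof -
  obtain C where C: "\<forall>N\<ge>4. aa N \<le> C + \<epsilon>/2 * real N + bb N" using aa_upper[of "\<epsilon>/2"] e by auto
  show ?thesis unfolding eventually_sequentially
  proof (intro exI allI impI)
    fix N assume N: "N \<ge> max 4 (nat \<lceil>2 * \<bar>C\<bar> / \<epsilon>\<rceil> + 1)"
    then have N4: "N \<ge> 4" and NC: "real N > 2 * \<bar>C\<bar> / \<epsilon>" by linarith+
    have Np: "real N > 0" using N4 by simp
    have "bb N \<le> real N * LL" using bbL[of N] N4 Np by (simp add: divide_le_eq mult.commute)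
    then have "aa N \<le> C + \<epsilon>/2 * real N + real N * LL" using C N4 by fastforce
    then have "aa N / real N \<le> C / real N + \<epsilon>/2 + LL" using Np by (simp add: field_simps)
    moreover have "C / real N < \<epsilon>/2"
    proof -
      have "2 * \<bar>C\<bar> < \<epsilon> * real N" using NC e by (simp add: field_simps)
      then show ?thesis using Np by (simp add: field_simps)
    qed
    ultimately show "aa N / real N \<le> LL + \<epsilon>" by linarith
  qed
qed


lemma lower_ev:
  assumes e: "\<epsilon> > 0"
  shows "eventually (\<lambda>N. LL - 5 * \<epsilon> \<le> aa N / real N) sequentially"
proof -
  have ne: "(\<lambda>N. bb N / real N) ` {2..} \<noteq> {}" by auto
  have "LL - \<epsilon> < Sup ((\<lambda>N. bb N / real N) ` {2..})" using e by (simp add: LL_def)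
  then obtain M where M: "M \<ge> 2" and bM: "LL - \<epsilon> < bb M / real M"
    using less_cSup_iff[OF ne bdd] by auto
  have Mp: "real M > 0" using M by simp
  define D where "D = \<bar>2 * LL - 4 * \<epsilon> - c0\<bar>"
  define k where "k = nat \<lceil>D / (\<epsilon> * real M)\<rceil> + 1"
  have k1: "k \<ge> 1" by (simp add: k_def)
  define M' where "M' = k * M"
  have kMM: "M \<le> k * M" using mult_le_mono1[OF k1, of M] by simp
  have M'2: "M' \<ge> 2" unfolding M'_def using M kMM by linarith
  have M'p: "real M' > 0" using M'2 by simp
  have kD: "D \<le> real M' * \<epsilon>"
  proof -
    have "D / (\<epsilon> * real M) \<le> real k" unfolding k_def by linarith
    then have "D \<le> real k * (\<epsilon> * real M)" using e Mp by (simp add: divide_le_eq)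
    then show ?thesis by (simp add: M'_def algebra_simps)
  qed
  have bM': "real M' * (LL - \<epsilon>) < bb M'"
  proof -
    have "real k * bb M \<le> bb M'" unfolding M'_def by (rule bb_mult[OF M k1])
    moreover have "real M * (LL - \<epsilon>) < bb M" using bM Mp by (simp add: field_simps)
    then have "real k * (real M * (LL - \<epsilon>)) < real k * bb M" using k1 by simp
    ultimately show ?thesis by (simp add: M'_def algebra_simps)
  qed
  define T where "T = M' + 2"
  define u where "u = 1 / real T"
  define v where "v = real (M' + 1) / real T"
  have T4: "T \<ge> 4" using M'2 by (simp add: T_def)
  have Tp: "real T > 0" using T4 by simp
  have tr: "bb M' + c0 \<le> cc u v T" unfolding u_def v_def T_def by (rule trick[OF M'2])
  have ccT: "LL - 2 * \<epsilon> \<le> cc u v T / real T"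
  proof -
    have "real T * (LL - 2 * \<epsilon>) = real M' * (LL - \<epsilon>) - (real M' * \<epsilon> - 2 * LL + 4 * \<epsilon>)"
      by (simp add: T_def algebra_simps)
    also have "\<dots> \<le> real M' * (LL - \<epsilon>) + c0" using kD unfolding D_def by linarith
    also have "\<dots> \<le> cc u v T" using bM' tr by linarith
    finally show ?thesis using Tp by (simp add: field_simps)
  qed
  have u0: "0 < u" and u4: "u \<le> 1/4" using T4 Tp by (auto simp: u_def field_simps)
  have v4: "3/4 \<le> v" and v1: "v < 1"
  proof -
    have "3 * real T \<le> 4 * real (M' + 1)" using T4 by (simp add: T_def)
    then show "3/4 \<le> v" using Tp by (simp add: v_def field_simps)
    show "v < 1" using Tp by (simp add: v_def T_def field_simps)
  qed
  have sup: "cc u v n + cc u v m \<le> cc u v (n + m)" if "n \<ge> 4" "m \<ge> 4" for n m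
    using cc_super[OF u4 v4 that] .
  have T1: "T \<ge> 1" using T4 by simp
  have ev1: "eventually (\<lambda>N. cc u v T / real T - \<epsilon> \<le> cc u v N / real N) sequentially"
    by (rule fekete_lower[of 4 "cc u v" T \<epsilon>, OF sup T4 T1 e])
  obtain C where C: "\<forall>N\<ge>4. C - \<epsilon> * real N + cc u v N \<le> aa N" using aa_lower[OF u0 u4 v4 v1 e] by auto
  have ev2: "eventually (\<lambda>N. - \<epsilon> \<le> C / real N \<and> N \<ge> 4) sequentially"
    unfolding eventually_sequentially
  proof (intro exI allI impI)
    fix N assume N: "N \<ge> max 4 (nat \<lceil>\<bar>C\<bar> / \<epsilon>\<rceil> + 1)"
    then have N4: "N \<ge> 4" and NC: "real N > \<bar>C\<bar> / \<epsilon>" by linarith+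
    have Np: "real N > 0" using N4 by simp
    have "\<bar>C\<bar> < \<epsilon> * real N" using NC e by (simp add: field_simps)
    then have "\<bar>C\<bar> / real N < \<epsilon>" using Np by (simp add: field_simps)
    moreover have "- (\<bar>C\<bar> / real N) \<le> C / real N" using Np by (simp add: field_simps)
    ultimately show "- \<epsilon> \<le> C / real N \<and> N \<ge> 4" using N4 by linarith
  qed
  show ?thesis
    using ev1 ev2
  proof eventually_elim
    case (elim N)
    have N4: "N \<ge> 4" and Cn: "- \<epsilon> \<le> C / real N" using elim(2) by auto
    have Np: "real N > 0" using N4 by simp
    have "(C - \<epsilon> * real N + cc u v N) / real N \<le> aa N / real N"
      using C N4 Np by (intro divide_right_mono) auto
    moreover have "(C - \<epsilon> * real N + cc u v N) / real N = C / real N - \<epsilon> + cc u v N / real N"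
      using Np by (simp add: field_simps)
    ultimately show ?case using elim(1) ccT Cn by linarith
  qed
qed

lemma conv: "(\<lambda>N. aa N / real N) \<longlonglongrightarrow> LL"
proof (rule order_tendstoI)
  fix a assume a: "a < LL"
  have "eventually (\<lambda>N. LL - 5 * ((LL - a) / 10) \<le> aa N / real N) sequentially"
    using a by (intro lower_ev) simp
  moreover have "a < LL - 5 * ((LL - a) / 10)" using a by (simp add: field_simps)
  ultimately show "eventually (\<lambda>N. a < aa N / real N) sequentially"
    by (auto elim: eventually_mono)
next
  fix a assume a: "LL < a"
  have "eventually (\<lambda>N. aa N / real N \<le> LL + (a - LL) / 2) sequentially"
    using a by (intro upper_ev) simp
  moreover have "LL + (a - LL) / 2 < a" using a by (simp add: field_simps)
  ultimately show "eventually (\<lambda>N. aa N / real N < a) sequentially"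
    by (auto elim: eventually_mono)
qed


lemma r_tends:
  assumes h0: "H 0 = ereal h0"
  shows "(\<lambda>k. real_of_ereal (H (1 / real k))) \<longlonglongrightarrow> h0"
proof -
  have Hc: "(H \<longlongrightarrow> H 0) (at 0 within {0..1})"
    using H_cont unfolding continuous_on_def by auto
  have fl: "filterlim (\<lambda>k. 1 / real k) (at 0 within {0..1}) sequentially"
    unfolding filterlim_at
  proof
    show "eventually (\<lambda>k. 1 / real k \<in> {0..1} \<and> 1 / real k \<noteq> 0) sequentially"
      unfolding eventually_sequentially by (intro exI[of _ 1]) auto
    show "(\<lambda>k. 1 / real k) \<longlonglongrightarrow> 0" by (rule lim_const_over_n)
  qed
  have comp: "(\<lambda>k. H (1 / real k)) \<longlonglongrightarrow> ereal h0"
    using filterlim_compose[OF Hc fl] h0 by simp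
  have ev: "eventually (\<lambda>k. H (1 / real k) = ereal (real_of_ereal (H (1 / real k)))) sequentially"
    unfolding eventually_sequentially
  proof (intro exI[of _ 2] allI impI)
    fix k :: nat assume k: "k \<ge> 2"
    have x: "1 / real k \<in> {0<..<1}" using k by (auto simp: field_simps)
    then have "H (1 / real k) \<noteq> -\<infinity>" by (rule H_real)
    moreover have "H (1 / real k) \<noteq> \<infinity>" using x by (intro H_not_pinf) auto
    ultimately show "H (1 / real k) = ereal (real_of_ereal (H (1 / real k)))" by (cases "H (1 / real k)") auto
  qed
  have "(\<lambda>k. ereal (real_of_ereal (H (1 / real k)))) \<longlonglongrightarrow> ereal h0"
    using comp tendsto_cong[OF ev] by simp
  then show ?thesis by (simp add: lim_ereal)
qed

lemma lnK_tends: "(\<lambda>k. ln (pmf Kp k) / real k) \<longlonglongrightarrow> 0"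
proof (rule tendsto_sandwich)
  define l where "l k = ln (C\<^sub>K / 2) / real k - (1 + \<alpha>) * (ln (real k) / real k)" for k :: nat
  show "(l \<longlongrightarrow> 0) sequentially"
  proof -
    have "(\<lambda>k. ln (C\<^sub>K / 2) / real k - (1 + \<alpha>) * (ln (real k) / real k)) \<longlonglongrightarrow> 0 - (1 + \<alpha>) * 0"
      by (intro tendsto_diff tendsto_mult tendsto_const lim_const_over_n lim_ln_over_n)
    then show ?thesis by (simp add: l_def[abs_def])
  qed
  show "((\<lambda>k. 0) \<longlongrightarrow> 0) sequentially" by simp
  have lnle: "ln (pmf Kp x) \<le> 0" for x
  proof (cases "pmf Kp x = 0")
    case False
    then have "0 < pmf Kp x" using pmf_nonneg[of Kp x] by linarith
    then show ?thesis using pmf_le_1[of Kp x] by (simp add: ln_le_zero_iff)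
  qed simp
  show "eventually (\<lambda>k. ln (pmf Kp k) / real k \<le> 0) sequentially"
    by (intro always_eventually allI divide_nonpos_nonneg) (auto simp: lnle)
  have rat: "((\<lambda>n. if pmf Kp n = 0 \<and> C\<^sub>K * real n powr (-(1 + \<alpha>)) = 0 then 1
        else pmf Kp n / (C\<^sub>K * real n powr (-(1 + \<alpha>)))) \<longlongrightarrow> 1) at_top"
    by (rule asymp_equivD[OF K_tail])
  have ev: "eventually (\<lambda>n. 1/2 < (if pmf Kp n = 0 \<and> C\<^sub>K * real n powr (-(1 + \<alpha>)) = 0 then 1
        else pmf Kp n / (C\<^sub>K * real n powr (-(1 + \<alpha>))))) at_top"
    by (rule order_tendstoD(1)[OF rat]) simp
  show "eventually (\<lambda>k. l k \<le> ln (pmf Kp k) / real k) sequentially"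
    using ev eventually_ge_at_top[of "1::nat"]
  proof eventually_elim
    case (elim k)
    define g where "g = C\<^sub>K * real k powr (-(1 + \<alpha>))"
    have kp: "real k > 0" using elim(2) by simp
    have gp: "g > 0" using CK_pos kp by (simp add: g_def)
    have rr: "(if pmf Kp k = 0 \<and> C\<^sub>K * real k powr (-(1 + \<alpha>)) = 0 then 1
        else pmf Kp k / (C\<^sub>K * real k powr (-(1 + \<alpha>)))) = pmf Kp k / g"
      using gp kp unfolding g_def by auto
    have "1/2 < pmf Kp k / g" using elim(1) unfolding rr .
    then have pg: "g / 2 < pmf Kp k" using gp by (simp add: field_simps)
    have "ln (g / 2) \<le> ln (pmf Kp k)" using pg gp by (subst ln_le_cancel_iff) auto
    moreover have "ln (g / 2) = ln (C\<^sub>K / 2) - (1 + \<alpha>) * ln (real k)"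
    proof -
      have "g / 2 = (C\<^sub>K / 2) * real k powr (-(1 + \<alpha>))" by (simp add: g_def)
      moreover have "ln ((C\<^sub>K / 2) * real k powr (-(1 + \<alpha>))) = ln (C\<^sub>K / 2) + ln (real k powr (-(1 + \<alpha>)))"
        by (rule ln_mult_pos) (use CK_pos kp in auto)
      ultimately have "ln (g / 2) = ln (C\<^sub>K / 2) + ln (real k powr (-(1 + \<alpha>)))" by simp
      also have "ln (real k powr (-(1 + \<alpha>))) = -(1 + \<alpha>) * ln (real k)" using kp by (simp add: ln_powr)
      finally show ?thesis by (simp add: algebra_simps)
    qed
    ultimately have "ln (C\<^sub>K / 2) - (1 + \<alpha>) * ln (real k) \<le> ln (pmf Kp k)" by simp
    then have "(ln (C\<^sub>K / 2) - (1 + \<alpha>) * ln (real k)) / real k \<le> ln (pmf Kp k) / real k"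
      using kp by (intro divide_right_mono) auto
    then show ?case by (simp add: l_def diff_divide_distrib)
  qed
qed

lemma LL_ge: "H 0 \<le> ereal LL"
proof (cases "H 0")
  case (real h0)
  define r where "r k = real_of_ereal (H (1 / real k))" for k :: nat
  define f where "f k = ln (pmf Kp k) / real k + r k + h / real k" for k :: nat
  have ft: "f \<longlonglongrightarrow> 0 + h0 + 0"
    unfolding f_def[abs_def] r_def
    by (intro tendsto_add lnK_tends r_tends[OF real] lim_const_over_n)
  have fle: "f k \<le> LL" if k: "k \<ge> 2" for k
  proof -
    have w: "wit 1 k \<in> comps k" using k by (intro wit_in) auto
    have wk: "wit 1 k = [k]" using k by (simp add: wit_def)
    note L = lnZf(3)[where G="EH H 0 1" and w="wit 1 k" and N=k and Kp=Kp and \<beta>=\<beta> and h=h, OF EH_nonneg w EH0_wit[OF k]]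
    have x: "1 / real k \<in> {0<..<1}" using k by (auto simp: field_simps)
    then have Hn: "H (1 / real k) \<noteq> -\<infinity>" by (rule H_real)
    have EHv: "EH H 0 1 1 k = exp (real k * r k)" using Hn x by (simp add: EH_def r_def)
    have pk: "pmf Kp k > 0" using K_pos k by simp
    have kp: "real k > 0" using k by simp
    have e1: "wK Kp (wit 1 k) = pmf Kp k" using k by (simp add: wit_def wK_def)
    have e2: "length (wit 1 k) = 1" by (simp add: wit_def)
    have L': "ln (pmf Kp k * exp (real k * r k)) + h * real (1::nat) \<le> bb k"
      using L unfolding e1 e2 EHv bb_def .
    have "ln (pmf Kp k * exp (real k * r k)) = ln (pmf Kp k) + real k * r k"
      using pk by (simp add: ln_mult)
    then have "ln (pmf Kp k) + real k * r k + h \<le> bb k" using L' by simp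
    then have "(ln (pmf Kp k) + real k * r k + h) / real k \<le> bb k / real k"
      using kp by (intro divide_right_mono) auto
    also have "\<dots> \<le> LL" using bbL[OF k] .
    finally show ?thesis using kp by (simp add: f_def add_divide_distrib)
  qed
  have "h0 \<le> LL"
    using LIMSEQ_le_const2[OF ft] fle by auto
  then show ?thesis using real by simp
next
  case PInf
  then show ?thesis using H_not_pinf[of 0] by simp
qed simp

lemma fe_eq: "free_energy Kp \<mu> (Psi_fun Q H) \<beta> h = LL"
proof -
  have ev: "eventually (\<lambda>N. (\<integral>\<omega>. ln (partition_fun Kp (Psi_fun Q H) \<beta> h \<omega> N) / real N \<partial>disorder_law \<mu>) = aa N / real N) sequentially"
    unfolding eventually_sequentially
  proof (intro exI[of _ 1] allI impI)
    fix N :: nat assume N: "N \<ge> 1"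
    have "(\<integral>\<omega>. ln (partition_fun Kp (Psi_fun Q H) \<beta> h \<omega> N) / real N \<partial>disorder_law \<mu>)
        = (\<integral>\<omega>. ln (Zf Kp \<beta> h (Psi_fun Q H) N \<omega>) / real N \<partial>\<Omega>)"
      unfolding disorder_law_def by (rule Bochner_Integration.integral_cong) (auto simp: partition_eq[OF K_zero N] Zf_def)
    also have "\<dots> = aa N / real N" by (simp add: aa_def)
    finally show "(\<integral>\<omega>. ln (partition_fun Kp (Psi_fun Q H) \<beta> h \<omega> N) / real N \<partial>disorder_law \<mu>) = aa N / real N" .
  qed
  have "(\<lambda>N. \<integral>\<omega>. ln (partition_fun Kp (Psi_fun Q H) \<beta> h \<omega> N) / real N \<partial>disorder_law \<mu>) \<longlonglongrightarrow> LL"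
    using tendsto_cong[OF ev] conv by simp
  then show ?thesis unfolding free_energy_def by (rule limI)
qed

lemma main_result: "H 0 \<le> ereal (free_energy Kp \<mu> (Psi_fun Q H) \<beta> h)"
  using LL_ge fe_eq by simp

end


theorem propositionB2:
  fixes Kp :: "nat pmf" and C\<^sub>K \<alpha> :: real
    and \<mu> :: "real measure"
    and H :: "real \<Rightarrow> ereal" and Q :: "nat \<Rightarrow> nat \<Rightarrow> real"
    and \<beta> h :: real
  assumes K_zero: "pmf Kp 0 = 0"
    and K_pos: "\<And>n. n \<ge> 1 \<Longrightarrow> pmf Kp n > 0"
    and \<alpha>_pos: "\<alpha> > 0" and CK_pos: "C\<^sub>K > 0"
    and K_tail: "(\<lambda>n. pmf Kp n) \<sim>[at_top] (\<lambda>n. C\<^sub>K * real n powr (-(1 + \<alpha>)))"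
    and \<mu>_prob: "prob_space \<mu>" and \<mu>_borel: "sets \<mu> = sets borel"
    and \<mu>_expmom: "\<And>s. integrable \<mu> (\<lambda>x. exp (s * x))"
    and \<mu>_mean: "(\<integral>x. x \<partial>\<mu>) = 0"
    and \<mu>_var: "(\<integral>x. x\<^sup>2 \<partial>\<mu>) = 1"
    and H_concave: "ereal_concave_on {0..1} H"
    and H_not_pinf: "\<And>x. x \<in> {0..1} \<Longrightarrow> H x \<noteq> \<infinity>"
    and H_real: "\<And>x. x \<in> {0<..<1} \<Longrightarrow> H x \<noteq> -\<infinity>"
    and H_analytic: "real_analytic_on {0<..<1} (\<lambda>x. real_of_ereal (H x))"
    and H_cont: "continuous_on {0..1} H"
    and Q_nonneg: "\<And>m N. Q m N \<ge> 0"
    and Q_upper: "\<And>b. b > 0 \<Longrightarrow> \<exists>c. \<forall>N m. m \<le> N \<longrightarrow> Q m N \<le> c * exp (b * real N)"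
    and Q_lower: "\<And>u v b. 0 < u \<Longrightarrow> u < v \<Longrightarrow> v < 1 \<Longrightarrow> b > 0 \<Longrightarrow>
        \<exists>c>0. \<forall>N m. 1 \<le> m \<and> m \<le> N \<and> u \<le> real m / real N \<and> real m / real N \<le> v
          \<longrightarrow> Q m N \<ge> c * exp (- b * real N)"
    and \<beta>_nonneg: "\<beta> \<ge> 0"
  shows "H 0 \<le> ereal (free_energy Kp \<mu> (Psi_fun Q H) \<beta> h)"
proof -
  have "main \<mu> Kp C\<^sub>K \<alpha> H Q"
    unfolding main_def main_axioms_def dis_def
    using \<mu>_prob \<mu>_borel \<mu>_expmom \<mu>_mean K_zero K_pos \<alpha>_pos CK_pos K_tail H_concave H_not_pinf
      H_real H_cont Q_nonneg Q_upper Q_lower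
    by blast
  then interpret main \<mu> Kp C\<^sub>K \<alpha> H Q \<beta> h .
  show ?thesis by (rule main_result)
qed

end
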